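(* Consider the battery-limited energy harvesting system described in the context, with battery capacity $c\ge 0$, i.i.d. energy arrivals distributed as a nonnegative random variable $X$, and a monotonically increasing concave reward function $r:[0,\infty)\to[0,\infty)$ with continuous first derivative $r'$, and assume $r'(\underline{x})>r'(\overline{x})$. Then the greedy policy is optimal, i.e. $\gamma^*(c)=\mathbb{E}[r(\min\{X,c\})]$, if and only if $c\le c^*$, where $$c^*\triangleq\max\{c\ge 0:\ r'(c)\ge \rho(c)\,\mathbb{E}[r'(X)\mid X<c]\}.$$ In particular, for the reward function $r(x)=\frac12\log(1+x)$, $$c^*=\max\left\{c\ge 0:\ \frac{1}{1+c}\ge \rho(c)\,\mathbb{E}\left[\left.\frac{1}{1+X}\right| X<c\right]\right\}.$$
   Context: Setting: $X_1,X_2,\dots$ are i.i.d. copies of a nonnegative random variable $X$ ($X_t$ is the energy harvested in slot $t$). An online power control policy is a sequence of maps $f_t$ with $G_t=f_t(X_1,\dots,X_t)$. The battery level evolves as $B_t=\min\{B_{t-1}-G_{t-1}+X_t,\,c\}$, $t\ge1$, with $B_0=G_0=0$. A policy is admissible if $G_t\le B_t$ for all $t$. Its throughput is $\liminf_{n\to\infty}\frac1n\mathbb{E}[\sum_{t=1}^n r(G_t)]$, and $\gamma^*(c)$ is the supremum of the throughput over all admissible policies. The greedy policy is $G_t=B_t$ for all $t$; its throughput is $\mathbb{E}[r(\min\{X,c\})]$. Notation: $\rho(x)\triangleq\mathbb{P}(X<x)$, $\underline{x}\triangleq\max\{x\ge0:\rho(x)=0\}$, $\overline{x}\triangleq\inf\{x\ge0:\rho(x)=1\}$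 (possibly $+\infty$), and $r'(\infty)\triangleq\lim_{x\to\infty}r'(x)$. The quantity $\rho(c)\mathbb{E}[r'(X)\mid X<c]$ means $\mathbb{E}[r'(X)\mathbf{1}\{X<c\}]$ (equal to $0$ when $\rho(c)=0$). Logarithms are natural. *)

theory Defs
  imports "HOL-Probability.Probability"
begin

text \<open>D is the distribution of the (nonnegative) energy arrival X, a probability
measure on the nonnegative reals. The i.i.d. arrivals X_1, X_2, ... are the
coordinates omega 1, omega 2, ... of the infinite product measure (omega 0 is unused).\<close>

definition rho :: "real measure \<Rightarrow> real \<Rightarrow> real" where
  "rho D x = measure D {y \<in> space D. y < x}"

definition xlow :: "real measure \<Rightarrow> real" where
  "xlow D = (GREATEST x. 0 \<le> x \<and> rho D x = 0)"

definition xhigh :: "real measure \<Rightarrow> ereal" where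
  "xhigh D = Inf (ereal ` {x. 0 \<le> x \<and> rho D x = 1})"

definition deriv_at_xhigh :: "(real \<Rightarrow> real) \<Rightarrow> real measure \<Rightarrow> real" where
  "deriv_at_xhigh r' D =
     (if xhigh D = \<infinity> then Lim at_top r' else r' (real_of_ereal (xhigh D)))"

definition arrivals :: "real measure \<Rightarrow> (nat \<Rightarrow> real) measure" where
  "arrivals D = (\<Pi>\<^sub>M i\<in>(UNIV::nat set). D)"

definition power :: "(nat \<Rightarrow> (nat \<Rightarrow> real) \<Rightarrow> real) \<Rightarrow> nat \<Rightarrow> (nat \<Rightarrow> real) \<Rightarrow> real" where
  "power f t \<omega> = (if t = 0 then 0 else f t \<omega>)"

fun battery :: "(nat \<Rightarrow> (nat \<Rightarrow> real) \<Rightarrow> real) \<Rightarrow> real \<Rightarrow> (nat \<Rightarrow> real) \<Rightarrow> nat \<Rightarrow> real" where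
  "battery f c \<omega> 0 = 0"
| "battery f c \<omega> (Suc t) = min (battery f c \<omega> t - power f t \<omega> + \<omega> (Suc t)) c"

definition online_policy :: "real measure \<Rightarrow> (nat \<Rightarrow> (nat \<Rightarrow> real) \<Rightarrow> real) \<Rightarrow> bool" where
  "online_policy D f \<longleftrightarrow>
     (\<forall>t. f t \<in> borel_measurable (arrivals D) \<and>
          (\<forall>\<omega>\<in>space (arrivals D). \<forall>\<omega>'\<in>space (arrivals D).
              (\<forall>i\<in>{1..t}. \<omega> i = \<omega>' i) \<longrightarrow> f t \<omega> = f t \<omega>'))"

definition admissible :: "real measure \<Rightarrow> real \<Rightarrow> (nat \<Rightarrow> (nat \<Rightarrow> real) \<Rightarrow> real) \<Rightarrow> bool" where
  "admissible D c f \<longleftrightarrow> online_policy D f \<and>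
     (\<forall>\<omega>\<in>space (arrivals D). \<forall>t. 0 \<le> power f t \<omega> \<and> power f t \<omega> \<le> battery f c \<omega> t)"

definition throughput :: "real measure \<Rightarrow> (real \<Rightarrow> real) \<Rightarrow> (nat \<Rightarrow> (nat \<Rightarrow> real) \<Rightarrow> real) \<Rightarrow> ereal" where
  "throughput D r f =
     liminf (\<lambda>n::nat. ereal ((\<Sum>t=1..n. \<integral>\<omega>. r (power f t \<omega>) \<partial>arrivals D) / real n))"

definition gamma_star :: "real measure \<Rightarrow> (real \<Rightarrow> real) \<Rightarrow> real \<Rightarrow> ereal" where
  "gamma_star D r c = (SUP f \<in> {f. admissible D c f}. throughput D r f)"

definition greedy_optimal :: "real measure \<Rightarrow> (real \<Rightarrow> real) \<Rightarrow> real \<Rightarrow> bool" where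
  "greedy_optimal D r c \<longleftrightarrow> gamma_star D r c = ereal (\<integral>x. r (min x c) \<partial>D)"

text \<open>The set whose maximum is c*: r'(x) >= rho(x) E[r'(X) | X < x] = E[r'(X) 1{X<x}].\<close>
definition cstar_set :: "real measure \<Rightarrow> (real \<Rightarrow> real) \<Rightarrow> real set" where
  "cstar_set D r' = {x. 0 \<le> x \<and> (\<integral>y. r' y * indicator {y. y < x} y \<partial>D) \<le> r' x}"

end

theory Submission
  imports Defs
begin


locale rfun =
  fixes r r' :: "real \<Rightarrow> real"
  assumes r_nonneg: "\<forall>x\<ge>0. 0 \<le> r x"
    and r_mono: "mono_on {0..} r"
    and r_conc: "concave_on {0..} r"
    and r_deriv: "\<forall>x\<ge>0. (r has_real_derivative r' x) (at x within {0..})"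
    and r'_cont: "continuous_on {0..} r'"
begin

lemma r_cont: "continuous_on {0..} r"
proof -
  have "continuous (at x within {0..}) r" if "x \<in> {0..}" for x
    using r_deriv that has_field_derivative_imp_has_derivative has_derivative_continuous by fastforce
  then show ?thesis using continuous_on_eq_continuous_within by blast
qed

lemma tangent_int:
  assumes "0 \<le> x" "x < y"
  shows "r' y * (y - x) \<le> r y - r x"
proof -
  have cv: "convex_on {0..} (\<lambda>x. - r x)" using r_conc by (simp add: convex_on_iff_concave)
  have d: "((\<lambda>x. - r x) has_field_derivative - r' y) (at y within {0..})"
    using r_deriv assms by (auto intro!: derivative_eq_intros)
  have "(\<lambda>x. - r x) x - (\<lambda>x. - r x) y \<ge> - r' y * (x - y)"
    by (rule convex_on_imp_above_tangent[OF cv _ _ _ d]) (use assms in \<open>auto\<close>)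
  then show ?thesis by (simp add: algebra_simps)
qed

lemma tangent_up_pos:
  assumes "0 < x" "x \<le> y"
  shows "r y - r x \<le> r' x * (y - x)"
proof -
  have cv: "convex_on {0..} (\<lambda>x. - r x)" using r_conc by (simp add: convex_on_iff_concave)
  have d: "((\<lambda>x. - r x) has_field_derivative - r' x) (at x within {0..})"
    using r_deriv assms by (auto intro!: derivative_eq_intros)
  have "(\<lambda>x. - r x) y - (\<lambda>x. - r x) x \<ge> - r' x * (y - x)"
    by (rule convex_on_imp_above_tangent[OF cv _ _ _ d]) (use assms in \<open>auto\<close>)
  then show ?thesis by (simp add: algebra_simps)
qed

lemma tangent_up:
  assumes "0 \<le> x" "x \<le> y"
  shows "r y - r x \<le> r' x * (y - x)"
proof (cases "x = 0 \<and> y > 0")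
  case False
  then show ?thesis using assms tangent_up_pos by (cases "x = 0") auto
next
  case True
  then have x0: "x = 0" and yp: "y > 0" by auto
  have lim1: "((\<lambda>z. r y - r z) \<longlongrightarrow> r y - r 0) (at_right 0)"
  proof -
    have "(r \<longlongrightarrow> r 0) (at 0 within {0..})"
      using r_cont by (meson atLeast_iff continuous_on_def order_refl)
    then have "(r \<longlongrightarrow> r 0) (at_right 0)"
      by (rule tendsto_within_subset) auto
    then show ?thesis by (intro tendsto_intros)
  qed
  have lim2: "((\<lambda>z. r' z * (y - z)) \<longlongrightarrow> r' 0 * (y - 0)) (at_right 0)"
  proof -
    have "(r' \<longlongrightarrow> r' 0) (at 0 within {0..})"
      using r'_cont by (meson atLeast_iff continuous_on_def order_refl)
    then have "(r' \<longlongrightarrow> r' 0) (at_right 0)"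
      by (rule tendsto_within_subset) auto
    then show ?thesis by (intro tendsto_intros)
  qed
  have ev: "eventually (\<lambda>z. r y - r z \<le> r' z * (y - z)) (at_right 0)"
    using eventually_at_right_real[OF yp] by eventually_elim (auto intro!: tangent_up_pos)
  have "r y - r 0 \<le> r' 0 * (y - 0)"
    by (rule tendsto_le[OF _ lim2 lim1 ev]) simp
  then show ?thesis using x0 by simp
qed

lemma tangent_low:
  assumes "0 \<le> x" "x \<le> y"
  shows "r' y * (y - x) \<le> r y - r x"
  using assms tangent_int by (cases "x = y") auto

lemma r'_antimono:
  assumes "0 \<le> x" "x \<le> y"
  shows "r' y \<le> r' x"
proof (cases "x = y")
  case False
  then have "x < y" using assms by simp
  have "r' y * (y - x) \<le> r' x * (y - x)" using tangent_low[OF assms] tangent_up[OF assms] by linarith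
  then show ?thesis using \<open>x < y\<close> by simp
qed simp

lemma r'_nonneg:
  assumes "0 \<le> x"
  shows "0 \<le> r' x"
proof -
  have "r x \<le> r (x + 1)" using r_mono assms by (auto intro: mono_onD)
  then show ?thesis using tangent_up[of x "x+1"] assms by simp
qed

lemma r_mono': "0 \<le> x \<Longrightarrow> x \<le> y \<Longrightarrow> r x \<le> r y"
  using r_mono by (auto intro: mono_onD)

end


lemma pfm: "prob_space M \<Longrightarrow> finite_measure M"
  by (simp add: prob_space_def)

lemma bint:
  fixes f :: "'a \<Rightarrow> real"
  assumes "finite_measure M" "f \<in> borel_measurable M" "\<And>x. x \<in> space M \<Longrightarrow> \<bar>f x\<bar> \<le> B"
  shows "integrable M f"
  using assms by (intro finite_measure.integrable_const_bound[where B=B]) auto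

locale distD =
  fixes D :: "real measure"
  assumes PD: "prob_space D"
    and SD: "sets D = sets (restrict_space borel {0..})"
begin

abbreviation "M \<equiv> arrivals D"

lemma space_D: "space D = {0..}"
  using sets_eq_imp_space_eq[OF SD] by simp

lemma meas_D: "f \<in> borel_measurable borel \<Longrightarrow> f \<in> borel_measurable D"
  using measurable_cong_sets[OF SD refl] measurable_restrict_space1 by blast

lemma meas_D_cont: "continuous_on {0..} f \<Longrightarrow> f \<in> borel_measurable D"
  using measurable_cong_sets[OF SD refl] borel_measurable_continuous_on_restrict by blast

lemma int_D: "f \<in> borel_measurable D \<Longrightarrow> (\<And>x. 0 \<le> x \<Longrightarrow> \<bar>f x\<bar> \<le> B) \<Longrightarrow> integrable D (f::real\<Rightarrow>real)"
  using PD by (intro bint[where B=B]) (auto simp: space_D pfm)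

lemma PM: "prob_space M"
  unfolding arrivals_def using PD by (intro prob_space_PiM) auto

lemma space_M: "space M = {\<omega>. \<forall>i. 0 \<le> \<omega> i}"
  unfolding arrivals_def by (auto simp: space_PiM space_D PiE_def extensional_def)

lemma comp_meas[measurable]: "(\<lambda>\<omega>. \<omega> i) \<in> measurable M D"
  unfolding arrivals_def by simp

lemma int_M: "f \<in> borel_measurable M \<Longrightarrow> (\<And>\<omega>. \<omega> \<in> space M \<Longrightarrow> \<bar>f \<omega>\<bar> \<le> B) \<Longrightarrow> integrable M (f::_\<Rightarrow>real)"
  using PM by (intro bint[where B=B]) (auto simp: pfm)

lemma IND:
  fixes u :: "(nat \<Rightarrow> real) \<Rightarrow> real" and h :: "real \<Rightarrow> real"
  assumes u: "u \<in> borel_measurable M" "\<And>\<omega>. \<omega> \<in> space M \<Longrightarrow> \<bar>u \<omega>\<bar> \<le> Bu"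
    and uj: "\<And>w x. w \<in> space M \<Longrightarrow> 0 \<le> x \<Longrightarrow> u (w(j := x)) = u w"
    and h: "h \<in> borel_measurable D" "\<And>x. 0 \<le> x \<Longrightarrow> \<bar>h x\<bar> \<le> Bh"
  shows "(\<integral>\<omega>. u \<omega> * h (\<omega> j) \<partial>M) = (\<integral>\<omega>. u \<omega> \<partial>M) * (\<integral>x. h x \<partial>D)"
proof -
  let ?P = "PiM (UNIV - {j}) (\<lambda>_. D)"
  interpret D: prob_space D by (rule PD)
  interpret P: prob_space ?P by (rule prob_space_PiM) (auto simp: PD)
  interpret DP: pair_prob_space D ?P ..
  define T where "T = (\<lambda>p::real \<times> (nat \<Rightarrow> real). (snd p)(j := fst p))"
  have T: "T \<in> measurable (D \<Otimes>\<^sub>M ?P) M"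
    unfolding T_def arrivals_def
    by (rule measurable_fun_upd[where J="UNIV - {j}"]) auto
  have eq: "distr (D \<Otimes>\<^sub>M ?P) M T = M"
  proof -
    have "distr (D \<Otimes>\<^sub>M ?P) (PiM (insert j (UNIV - {j})) (\<lambda>_. D)) (\<lambda>(x, X). X(j := x)) = PiM (insert j (UNIV - {j})) (\<lambda>_. D)"
      by (rule distr_pair_PiM_eq_PiM) (auto simp: PD)
    moreover have "(\<lambda>(x, X). X(j := x)) = T" unfolding T_def by auto
    ultimately show ?thesis unfolding arrivals_def by simp
  qed
  have intT: "integral\<^sup>L M g = (\<integral>p. g (T p) \<partial>(D \<Otimes>\<^sub>M ?P))" if g: "g \<in> borel_measurable M" for g :: "_ \<Rightarrow> real"
  proof -
    have "integral\<^sup>L M g = integral\<^sup>L (distr (D \<Otimes>\<^sub>M ?P) M T) g" using eq by simp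
    also have "\<dots> = (\<integral>p. g (T p) \<partial>(D \<Otimes>\<^sub>M ?P))" by (rule integral_distr[OF T g])
    finally show ?thesis .
  qed
  define v where "v X = u (X(j := 0))" for X :: "nat \<Rightarrow> real"
  have z: "(\<lambda>X::nat \<Rightarrow> real. X(j := 0)) \<in> measurable ?P M"
    unfolding arrivals_def
    by (rule measurable_fun_upd[where J="UNIV - {j}"]) (auto simp: space_D)
  have vm: "v \<in> borel_measurable ?P"
    unfolding v_def using measurable_comp[OF z u(1)] by (simp add: comp_def)
  have uT: "u (T p) = v (snd p)" if p: "p \<in> space (D \<Otimes>\<^sub>M ?P)" for p
  proof -
    have sp: "(snd p)(j := 0) \<in> space M" "0 \<le> fst p"
      using p by (auto simp: space_pair_measure space_PiM space_D space_M PiE_def)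
    have "u (((snd p)(j := 0))(j := fst p)) = u ((snd p)(j := 0))" by (rule uj[OF sp])
    then show ?thesis by (simp add: T_def v_def)
  qed
  have Tj: "T p j = fst p" for p by (simp add: T_def)
  have vb: "\<bar>v X\<bar> \<le> Bu" if "X \<in> space ?P" for X
    using u(2) measurable_space[OF z that] by (simp add: v_def)
  have hm: "(\<lambda>p. h (fst p)) \<in> borel_measurable (D \<Otimes>\<^sub>M ?P)" using h(1) by measurable
  have vm2: "(\<lambda>p. v (snd p)) \<in> borel_measurable (D \<Otimes>\<^sub>M ?P)" using vm by measurable
  have "(\<integral>\<omega>. u \<omega> * h (\<omega> j) \<partial>M) = (\<integral>p. u (T p) * h (T p j) \<partial>(D \<Otimes>\<^sub>M ?P))"
    by (rule intT) (use u(1) h(1) in measurable)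
  also have "\<dots> = (\<integral>p. h (fst p) * v (snd p) \<partial>(D \<Otimes>\<^sub>M ?P))"
    by (rule Bochner_Integration.integral_cong) (auto simp: uT Tj)
  also have "\<dots> = (\<integral>x. (\<integral>X. h x * v X \<partial>?P) \<partial>D)"
  proof -
    have "integrable (D \<Otimes>\<^sub>M ?P) (\<lambda>(x, X). h x * v X)"
    proof (rule bint[where B="Bh * Bu"])
      show "finite_measure (D \<Otimes>\<^sub>M ?P)" by (simp add: DP.finite_measure_axioms)
      show "(\<lambda>(x, X). h x * v X) \<in> borel_measurable (D \<Otimes>\<^sub>M ?P)"
        using hm vm2 by (simp add: case_prod_beta')
      fix p assume p: "p \<in> space (D \<Otimes>\<^sub>M ?P)"
      then have "0 \<le> fst p" "snd p \<in> space ?P" by (auto simp: space_pair_measure space_D)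
      then have "\<bar>h (fst p)\<bar> \<le> Bh" "\<bar>v (snd p)\<bar> \<le> Bu" using h(2) vb by auto
      then have "\<bar>h (fst p)\<bar> * \<bar>v (snd p)\<bar> \<le> Bh * Bu" by (intro mult_mono) auto
      then show "\<bar>(\<lambda>(x, X). h x * v X) p\<bar> \<le> Bh * Bu" by (simp add: case_prod_beta' abs_mult)
    qed
    from DP.integral_fst[OF this] show ?thesis by (simp add: case_prod_beta')
  qed
  also have "\<dots> = (\<integral>x. h x * (\<integral>X. v X \<partial>?P) \<partial>D)" by simp
  also have "\<dots> = (\<integral>X. v X \<partial>?P) * (\<integral>x. h x \<partial>D)" by (simp add: mult.commute)
  finally have 1: "(\<integral>\<omega>. u \<omega> * h (\<omega> j) \<partial>M) = (\<integral>X. v X \<partial>?P) * (\<integral>x. h x \<partial>D)" .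
  have "(\<integral>\<omega>. u \<omega> \<partial>M) = (\<integral>p. u (T p) \<partial>(D \<Otimes>\<^sub>M ?P))"
    by (rule intT) (use u(1) in measurable)
  also have "\<dots> = (\<integral>p. v (snd p) \<partial>(D \<Otimes>\<^sub>M ?P))"
    by (rule Bochner_Integration.integral_cong) (auto simp: uT)
  also have "\<dots> = (\<integral>x. (\<integral>X. v X \<partial>?P) \<partial>D)"
  proof -
    have "integrable (D \<Otimes>\<^sub>M ?P) (\<lambda>(x, X). v X)"
    proof (rule bint[where B="Bu"])
      show "finite_measure (D \<Otimes>\<^sub>M ?P)" by (simp add: DP.finite_measure_axioms)
      show "(\<lambda>(x, X). v X) \<in> borel_measurable (D \<Otimes>\<^sub>M ?P)"
        using vm2 by (simp add: case_prod_beta')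
      fix p assume p: "p \<in> space (D \<Otimes>\<^sub>M ?P)"
      then have "snd p \<in> space ?P" by (auto simp: space_pair_measure)
      then show "\<bar>(\<lambda>(x, X). v X) p\<bar> \<le> Bu" using vb by (simp add: case_prod_beta')
    qed
    from DP.integral_fst[OF this] show ?thesis by (simp add: case_prod_beta')
  qed
  also have "\<dots> = (\<integral>X. v X \<partial>?P)" by (simp add: D.prob_space)
  finally show ?thesis using 1 by simp
qed

end


lemma cont_comp_meas:
  fixes h :: "real \<Rightarrow> real"
  assumes h: "continuous_on {0..} h" and g: "g \<in> borel_measurable N" and g0: "\<And>x. x \<in> space N \<Longrightarrow> 0 \<le> g x"
  shows "(\<lambda>x. h (g x)) \<in> borel_measurable N"
proof -
  have c: "continuous_on UNIV (\<lambda>x. h (max 0 x))"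
    by (rule continuous_on_compose2[OF h]) (auto intro!: continuous_intros)
  have "(\<lambda>x. h (max 0 x)) \<in> borel_measurable borel" by (rule borel_measurable_continuous_onI[OF c])
  from measurable_comp[OF g this] have "(\<lambda>x. h (max 0 (g x))) \<in> borel_measurable N" by (simp add: comp_def)
  then show ?thesis by (rule measurable_cong[THEN iffD1, rotated]) (use g0 in \<open>auto simp: max_def\<close>)
qed

locale sys = rfun r r' + distD D for r r' :: "real \<Rightarrow> real" and D +
  fixes c :: real
  assumes c0: "0 \<le> c"
begin

definition R where "R = (\<integral>x. r (min x c) \<partial>D)"
definition F where "F x = (\<integral>y. r' y * indicator {y. y < x} y \<partial>D)" for x

lemma coord_borel[measurable]: "(\<lambda>\<omega>. \<omega> i) \<in> borel_measurable M"
proof -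
  have "(\<lambda>x::real. x) \<in> borel_measurable D" by (rule meas_D) simp
  from measurable_comp[OF comp_meas this] show ?thesis by (simp add: comp_def)
qed

lemma coord_int:
  fixes h :: "real \<Rightarrow> real"
  assumes "h \<in> borel_measurable D" "\<And>x. 0 \<le> x \<Longrightarrow> \<bar>h x\<bar> \<le> B"
  shows "(\<integral>\<omega>. h (\<omega> j) \<partial>M) = (\<integral>x. h x \<partial>D)"
proof -
  have "(\<integral>\<omega>. (\<lambda>_. 1) \<omega> * h (\<omega> j) \<partial>M) = (\<integral>\<omega>. (\<lambda>_. 1::real) \<omega> \<partial>M) * (\<integral>x. h x \<partial>D)"
    by (rule IND[where Bu=1 and Bh=B]) (use assms in auto)
  then show ?thesis using prob_space.prob_space[OF PM] by simp
qed

lemma online_dep: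
  assumes f: "online_policy D f" and w: "w \<in> space M" "w' \<in> space M"
  shows "(\<forall>i\<in>{1..t}. w i = w' i) \<Longrightarrow> battery f c w t = battery f c w' t \<and> power f t w = power f t w'"
proof (induction t)
  case 0
  then show ?case by (simp add: power_def)
next
  case (Suc t)
  then have IH: "battery f c w t = battery f c w' t \<and> power f t w = power f t w'" by auto
  have e: "w (Suc t) = w' (Suc t)" using Suc.prems by auto
  have "f (Suc t) w = f (Suc t) w'" using f w Suc.prems unfolding online_policy_def by blast
  then show ?case using IH e by (simp add: power_def)
qed

lemma meas_pol:
  assumes f: "online_policy D f"
  shows "power f t \<in> borel_measurable M \<and> (\<lambda>w. battery f c w t) \<in> borel_measurable M"
proof (induction t)
  case 0
  then show ?case by (simp add: power_def)
next
  case (Suc t)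
  then have [measurable]: "power f t \<in> borel_measurable M" "(\<lambda>w. battery f c w t) \<in> borel_measurable M" by auto
  have [measurable]: "f (Suc t) \<in> borel_measurable M" using f unfolding online_policy_def by auto
  have "power f (Suc t) = f (Suc t)" by (auto simp: power_def)
  then show ?case by (simp; measurable)
qed

lemma adm_bounds:
  assumes f: "admissible D c f" and w: "w \<in> space M"
  shows "0 \<le> power f t w" "power f t w \<le> battery f c w t" "battery f c w t \<le> c"
proof -
  show "0 \<le> power f t w" "power f t w \<le> battery f c w t" using f w unfolding admissible_def by auto
  show "battery f c w t \<le> c" using c0 by (cases t) auto
qed

lemma gamma_ge: "admissible D c f \<Longrightarrow> throughput D r f \<le> gamma_star D r c"
  unfolding gamma_star_def by (rule SUP_upper) auto

lemma gamma_le: "(\<And>f. admissible D c f \<Longrightarrow> throughput D r f \<le> x) \<Longrightarrow> gamma_star D r c \<le> x"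
  unfolding gamma_star_def by (rule SUP_least) auto

lemma r_meas: "g \<in> borel_measurable N \<Longrightarrow> (\<And>x. x \<in> space N \<Longrightarrow> 0 \<le> g x) \<Longrightarrow> (\<lambda>x. r (g x)) \<in> borel_measurable N"
  by (rule cont_comp_meas[OF r_cont])

lemma r'_meas: "g \<in> borel_measurable N \<Longrightarrow> (\<And>x. x \<in> space N \<Longrightarrow> 0 \<le> g x) \<Longrightarrow> (\<lambda>x. r' (g x)) \<in> borel_measurable N"
  by (rule cont_comp_meas[OF r'_cont])

lemma rmin_meas: "(\<lambda>x. r (min x c)) \<in> borel_measurable D"
proof (rule r_meas)
  show "(\<lambda>x. min x c) \<in> borel_measurable D" by (rule meas_D) simp
qed (use c0 in \<open>auto simp: space_D\<close>)

lemma rmin_bound: "0 \<le> x \<Longrightarrow> \<bar>r (min x c)\<bar> \<le> r c"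
  using r_nonneg r_mono'[of "min x c" c] c0 by auto

end


context sys begin

lemma r'_measD[measurable]: "r' \<in> borel_measurable D"
proof -
  have "(\<lambda>x. r' ((\<lambda>x. x) x)) \<in> borel_measurable D"
    by (rule r'_meas) (auto simp: space_D intro: meas_D)
  then show ?thesis by simp
qed

lemma r_measD[measurable]: "r \<in> borel_measurable D"
proof -
  have "(\<lambda>x. r ((\<lambda>x. x) x)) \<in> borel_measurable D"
    by (rule r_meas) (auto simp: space_D intro: meas_D)
  then show ?thesis by simp
qed

lemma idD[measurable]: "(\<lambda>x::real. x) \<in> borel_measurable D"
  by (rule meas_D) simp

lemma phi_meas: "(\<lambda>x. r' x * indicator {y. y < a} x) \<in> borel_measurable D"
  by measurable

lemma r'_bound: "0 \<le> x \<Longrightarrow> \<bar>r' x\<bar> \<le> r' 0"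
  using r'_nonneg r'_antimono by auto

lemma phi_bound: "0 \<le> x \<Longrightarrow> \<bar>r' x * indicator {y. y < a} x\<bar> \<le> r' 0"
  using r'_bound[of x] by (auto simp: indicator_def)

lemma UB:
  assumes Fc: "F c \<le> r' c" and f: "admissible D c f"
  shows "throughput D r f \<le> ereal R"
proof -
  have on: "online_policy D f" using f by (simp add: admissible_def)
  define s where "s t w = battery f c w t - power f t w" for t w
  have mG[measurable]: "power f t \<in> borel_measurable M" for t using meas_pol[OF on] by auto
  have mB[measurable]: "(\<lambda>w. battery f c w t) \<in> borel_measurable M" for t using meas_pol[OF on] by auto
  have ms[measurable]: "s t \<in> borel_measurable M" for t unfolding s_def by measurable
  have bs: "0 \<le> s t w" "s t w \<le> c" if "w \<in> space M" for t w
    using adm_bounds[OF f that, of t] unfolding s_def by auto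
  define k where "k = r' c"
  have k0: "0 \<le> k" using r'_nonneg c0 by (simp add: k_def)
  define phi where "phi x = r' x * indicator {y. y < c} x" for x
  have mphi[measurable]: "phi \<in> borel_measurable D" unfolding phi_def by (rule phi_meas)
  have bphi: "0 \<le> x \<Longrightarrow> \<bar>phi x\<bar> \<le> r' 0" for x unfolding phi_def by (rule phi_bound)
  have Fphi: "F c = (\<integral>x. phi x \<partial>D)" by (simp add: F_def phi_def)
  have mR[measurable]: "(\<lambda>w. r (power f t w)) \<in> borel_measurable M" for t
    by (rule r_meas) (use adm_bounds[OF f] in auto)
  have bR: "\<bar>r (power f t w)\<bar> \<le> r c" if "w \<in> space M" for t w
    using adm_bounds[OF f that, of t] r_nonneg r_mono'[of "power f t w" c] by auto
  have iR: "integrable M (\<lambda>w. r (power f t w))" for t by (rule int_M[OF mR bR])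
  have is': "integrable M (s t)" for t by (rule int_M[OF ms, where B=c]) (use bs in auto)
  have mRc[measurable]: "(\<lambda>w. r (min (w j) c)) \<in> borel_measurable M" for j
    using measurable_comp[OF comp_meas rmin_meas] by (simp add: comp_def)
  have iRc: "integrable M (\<lambda>w. r (min (w j) c))" for j
    by (rule int_M[OF mRc, where B="r c"]) (use rmin_bound space_M in auto)
  have mphiM[measurable]: "(\<lambda>w. phi (w j)) \<in> borel_measurable M" for j
    using measurable_comp[OF comp_meas mphi] by (simp add: comp_def)
  have iprod: "integrable M (\<lambda>w. s t w * phi (w j))" for t j
  proof (rule int_M[where B="c * r' 0"])
    show "(\<lambda>w. s t w * phi (w j)) \<in> borel_measurable M" by measurable
    fix w assume w: "w \<in> space M"
    then have "0 \<le> w j" by (simp add: space_M)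
    then have "\<bar>s t w\<bar> * \<bar>phi (w j)\<bar> \<le> c * r' 0" using bs[OF w, of t] bphi
      by (intro mult_mono) auto
    then show "\<bar>s t w * phi (w j)\<bar> \<le> c * r' 0" by (simp add: abs_mult)
  qed
  have pw: "r (power f (Suc n) w) + k * s (Suc n) w \<le> r (min (w (Suc n)) c) + s n w * phi (w (Suc n))"
    if w: "w \<in> space M" for n w
  proof -
    define x where "x = w (Suc n)"
    have x0: "0 \<le> x" using w by (simp add: space_M x_def)
    define b where "b = battery f c w (Suc n)"
    define g where "g = power f (Suc n) w"
    have gb: "0 \<le> g" "g \<le> b" "b \<le> c" using adm_bounds[OF f w, of "Suc n"] by (auto simp: b_def g_def)
    have sn: "s (Suc n) w = b - g" by (simp add: s_def b_def g_def)
    have t1: "r' b * (b - g) \<le> r b - r g" by (rule tangent_low) (use gb in auto)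
    have "k \<le> r' b" unfolding k_def by (rule r'_antimono) (use gb in auto)
    then have "k * (b - g) \<le> r' b * (b - g)" using gb by (intro mult_right_mono) auto
    then have A: "r g + k * s (Suc n) w \<le> r b" using t1 unfolding sn by linarith
    have bdef: "b = min (s n w + x) c" by (simp add: b_def s_def x_def)
    have sn0: "0 \<le> s n w" using bs[OF w] by auto
    have B: "r b \<le> r (min x c) + s n w * phi x"
    proof (cases "x < c")
      case True
      then have px: "phi x = r' x" by (simp add: phi_def)
      have xb: "x \<le> b" "b - x \<le> s n w" using bdef True sn0 by auto
      have "r b - r x \<le> r' x * (b - x)" by (rule tangent_up) (use x0 xb in auto)
      also have "\<dots> \<le> r' x * s n w" using xb r'_nonneg[OF x0] by (intro mult_left_mono) auto
      finally show ?thesis using True px by (simp add: mult.commute)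
    next
      case False
      then have "phi x = 0" "b = c" "min x c = c" using bdef sn0 by (auto simp: phi_def)
      then show ?thesis by simp
    qed
    show ?thesis using A B by (simp add: x_def g_def)
  qed
  have step: "(\<integral>w. r (power f (Suc n) w) \<partial>M) + k * (\<integral>w. s (Suc n) w \<partial>M) \<le> R + k * (\<integral>w. s n w \<partial>M)" for n
  proof -
    have "(\<integral>w. r (power f (Suc n) w) \<partial>M) + k * (\<integral>w. s (Suc n) w \<partial>M)
        = (\<integral>w. r (power f (Suc n) w) + k * s (Suc n) w \<partial>M)"
      using iR is' by simp
    also have "\<dots> \<le> (\<integral>w. r (min (w (Suc n)) c) + s n w * phi (w (Suc n)) \<partial>M)"
      by (rule integral_mono) (use iR is' iRc iprod pw in auto)
    also have "\<dots> = (\<integral>w. r (min (w (Suc n)) c) \<partial>M) + (\<integral>w. s n w * phi (w (Suc n)) \<partial>M)"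
      using iRc iprod by simp
    also have "(\<integral>w. r (min (w (Suc n)) c) \<partial>M) = R"
      unfolding R_def by (rule coord_int[OF rmin_meas rmin_bound])
    also have "(\<integral>w. s n w * phi (w (Suc n)) \<partial>M) = (\<integral>w. s n w \<partial>M) * F c"
      unfolding Fphi
    proof (rule IND[where Bu=c and Bh="r' 0"])
      show "\<And>w. w \<in> space M \<Longrightarrow> \<bar>s n w\<bar> \<le> c" using bs by auto
      show "\<And>x. 0 \<le> x \<Longrightarrow> \<bar>phi x\<bar> \<le> r' 0" by (rule bphi)
      fix w x assume w: "w \<in> space M" and x: "0 \<le> (x::real)"
      have w': "w(Suc n := x) \<in> space M" using w x by (auto simp: space_M)
      have "battery f c (w(Suc n := x)) n = battery f c w n \<and> power f n (w(Suc n := x)) = power f n w"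
        by (rule online_dep[OF on w' w]) auto
      then show "s n (w(Suc n := x)) = s n w" by (simp add: s_def)
    qed auto
    also have "(\<integral>w. s n w \<partial>M) * F c \<le> (\<integral>w. s n w \<partial>M) * k"
      using Fc bs by (intro mult_left_mono) (auto simp: k_def intro!: integral_nonneg)
    finally show ?thesis by (simp add: mult.commute)
  qed
  have sum: "(\<Sum>t=1..n. \<integral>w. r (power f t w) \<partial>M) + k * (\<integral>w. s n w \<partial>M) \<le> real n * R" for n
  proof (induction n)
    case 0
    have "s 0 = (\<lambda>w. 0)" by (auto simp: s_def power_def)
    then show ?case by simp
  next
    case (Suc n)
    then show ?case using step[of n] by (simp add: algebra_simps)
  qed
  have sum': "(\<Sum>t=1..n. \<integral>w. r (power f t w) \<partial>M) \<le> real n * R" for n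
  proof -
    have "0 \<le> k * (\<integral>w. s n w \<partial>M)" using k0 bs by (intro mult_nonneg_nonneg integral_nonneg) auto
    then show ?thesis using sum[of n] by linarith
  qed
  show ?thesis unfolding throughput_def
  proof (rule Liminf_le)
    show "eventually (\<lambda>n. ereal ((\<Sum>t=1..n. \<integral>w. r (power f t w) \<partial>M) / real n) \<le> ereal R) sequentially"
      using eventually_ge_at_top[of "1::nat"]
    proof eventually_elim
      case (elim n)
      then show ?case using sum'[of n] by (simp add: divide_le_eq mult.commute)
    qed
  qed simp
qed

end


context sys begin

lemma greedy: "\<exists>f. admissible D c f \<and> throughput D r f = ereal R"
proof -
  define g where "g t w = (if t = 0 then 0 else min (w t) c)" for t and w :: "nat \<Rightarrow> real"
  have pw: "power g t w = g t w" for t w by (simp add: power_def g_def)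
  have bat: "battery g c w t = g t w" for t w
  proof (induction t)
    case 0 then show ?case by (simp add: g_def)
  next
    case (Suc t) then show ?case by (simp only: battery.simps pw Suc.IH) (simp add: g_def)
  qed
  have adm: "admissible D c g"
    unfolding admissible_def online_policy_def
  proof (intro conjI allI ballI impI)
    fix t
    show "g t \<in> borel_measurable M" unfolding g_def by measurable
    fix w w' assume "w \<in> space M" "w' \<in> space M" "\<forall>i\<in>{1..t}. w i = w' i"
    then show "g t w = g t w'" by (cases t) (auto simp: g_def)
  next
    fix w t assume "w \<in> space M"
    then show "0 \<le> power g t w" "power g t w \<le> battery g c w t"
      using c0 by (auto simp: pw bat g_def space_M)
  qed
  have ER: "(\<integral>w. r (power g t w) \<partial>M) = R" if "1 \<le> t" for t
  proof -
    have "(\<integral>w. r (power g t w) \<partial>M) = (\<integral>w. r (min (w t) c) \<partial>M)"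
      using that by (simp add: pw g_def)
    also have "\<dots> = R" unfolding R_def by (rule coord_int[OF rmin_meas rmin_bound])
    finally show ?thesis .
  qed
  have S: "(\<Sum>t=1..n. \<integral>w. r (power g t w) \<partial>M) = real n * R" for n
    using ER by simp
  have "throughput D r g = ereal R"
    unfolding throughput_def
  proof (rule lim_imp_Liminf)
    show "((\<lambda>n. ereal ((\<Sum>t=1..n. \<integral>w. r (power g t w) \<partial>M) / real n)) \<longlongrightarrow> ereal R) sequentially"
    proof (rule tendsto_eventually)
      show "eventually (\<lambda>n. ereal ((\<Sum>t=1..n. \<integral>w. r (power g t w) \<partial>M) / real n) = ereal R) sequentially"
        using eventually_ge_at_top[of "1::nat"] by eventually_elim (simp only: S, simp)
    qed
  qed simp
  then show ?thesis using adm by blast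
qed

lemma greedy_opt_if:
  assumes "F c \<le> r' c"
  shows "greedy_optimal D r c"
proof -
  obtain g where g: "admissible D c g" "throughput D r g = ereal R" using greedy by blast
  have "gamma_star D r c \<le> ereal R" by (rule gamma_le) (rule UB[OF assms])
  moreover have "ereal R \<le> gamma_star D r c" using gamma_ge[OF g(1)] g(2) by simp
  ultimately show ?thesis unfolding greedy_optimal_def R_def by simp
qed

lemma greedy_not_opt_if:
  assumes "admissible D c f" "ereal R < throughput D r f"
  shows "\<not> greedy_optimal D r c"
  using gamma_ge[OF assms(1)] assms(2) unfolding greedy_optimal_def R_def by simp

end


context sys begin

lemma DC:
  fixes f :: "nat \<Rightarrow> real \<Rightarrow> real"
  assumes "\<And>n. f n \<in> borel_measurable D" "g \<in> borel_measurable D"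
    and "\<And>n y. 0 \<le> y \<Longrightarrow> \<bar>f n y\<bar> \<le> B"
    and "\<And>y. 0 \<le> y \<Longrightarrow> (\<lambda>n. f n y) \<longlonglongrightarrow> g y"
  shows "(\<lambda>n. \<integral>y. f n y \<partial>D) \<longlonglongrightarrow> (\<integral>y. g y \<partial>D)"
proof (rule integral_dominated_convergence[where w="\<lambda>_. B"])
  show "integrable D (\<lambda>_. B)" by (rule finite_measure.integrable_const[OF pfm[OF PD]])
  show "AE x in D. (\<lambda>i. f i x) \<longlonglongrightarrow> g x" using assms(4) by (intro AE_I2) (auto simp: space_D)
  show "\<And>i. AE x in D. norm (f i x) \<le> B" using assms(3) by (intro AE_I2) (auto simp: space_D)
qed (use assms in auto)

lemma ind_meas[measurable]: "(\<lambda>y. indicator {y. y < a} y :: real) \<in> borel_measurable D"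
  by measurable

lemma rho_int: "rho D x = (\<integral>y. indicator {y. y < x} y \<partial>D)"
proof -
  have "{y \<in> space D. y < x} = {y. y < x} \<inter> space D" by auto
  then show ?thesis by (simp add: rho_def)
qed

lemma rho_nonneg: "0 \<le> rho D x" by (simp add: rho_def)

lemma rho_le1: "rho D x \<le> 1"
  unfolding rho_def using prob_space.prob_le_1[OF PD] by auto

lemma ind_int: "integrable D (\<lambda>y. indicator {y. y < a} y :: real)"
  by (rule int_D[where B=1]) (auto simp: indicator_def)

lemma rho_mono: "x \<le> y \<Longrightarrow> rho D x \<le> rho D y"
  unfolding rho_int by (rule integral_mono[OF ind_int ind_int]) (simp add: indicator_def)

lemma rho_0: "rho D 0 = 0"
proof -
  have e: "{y \<in> space D. y < 0} = {}" by (auto simp: space_D)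
  show ?thesis unfolding rho_def e by simp
qed

lemma phi_int: "integrable D (\<lambda>y. r' y * indicator {y. y < a} y)"
  by (rule int_D[OF phi_meas phi_bound])

lemma F_mono: "x \<le> y \<Longrightarrow> F x \<le> F y"
  unfolding F_def
proof (rule integral_mono[OF phi_int phi_int])
  fix t assume "x \<le> y" "t \<in> space D"
  then have "0 \<le> r' t" using r'_nonneg by (simp add: space_D)
  then show "r' t * indicator {y. y < x} t \<le> r' t * indicator {ya. ya < y} t"
    using \<open>x \<le> y\<close> by (simp add: indicator_def)
qed

lemma F_0: "F 0 = 0"
proof -
  have "F 0 = (\<integral>y. 0 \<partial>D)" unfolding F_def
    by (rule Bochner_Integration.integral_cong) (auto simp: space_D)
  then show ?thesis by simp
qed

lemma F_nonneg: "0 \<le> x \<Longrightarrow> 0 \<le> F x"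
  using F_mono[of 0 x] F_0 by simp

lemma cstar_eq: "cstar_set D r' = {x. 0 \<le> x \<and> F x \<le> r' x}"
  by (simp add: cstar_set_def F_def)

lemma ind_left:
  fixes g :: "real \<Rightarrow> real"
  assumes g: "g \<in> borel_measurable D" "\<And>y. 0 \<le> y \<Longrightarrow> \<bar>g y\<bar> \<le> B"
    and X: "X \<longlonglongrightarrow> x" "\<And>n. X n \<le> x"
  shows "(\<lambda>n. \<integral>y. g y * indicator {y. y < X n} y \<partial>D) \<longlonglongrightarrow> (\<integral>y. g y * indicator {y. y < x} y \<partial>D)"
proof (rule DC[where B=B])
  fix n and y :: real assume y: "0 \<le> y"
  then have "\<bar>g y\<bar> \<le> B" by (rule g(2))
  then have B0: "0 \<le> B" using abs_ge_zero order_trans by blast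
  show "\<bar>g y * indicator {y. y < X n} y\<bar> \<le> B" using B0 \<open>\<bar>g y\<bar> \<le> B\<close> by (simp add: indicator_def)
next
  fix y :: real
  show "(\<lambda>n. g y * indicator {y. y < X n} y) \<longlonglongrightarrow> g y * indicator {y. y < x} y"
  proof (cases "y < x")
    case True
    then have "eventually (\<lambda>n. y < X n) sequentially" using order_tendstoD(1)[OF X(1)] by blast
    then have "eventually (\<lambda>n. g y * indicator {y. y < X n} y = g y * indicator {y. y < x} y) sequentially"
      by eventually_elim (use True in auto)
    then show ?thesis by (rule tendsto_eventually)
  next
    case False
    then have "g y * indicator {y. y < X n} y = g y * indicator {y. y < x} y" for n
      using X(2)[of n] by (auto simp: indicator_def)
    then show ?thesis by (simp only:) simp
  qed
qed (use g in auto)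

lemma F_left: "X \<longlonglongrightarrow> x \<Longrightarrow> (\<And>n. X n \<le> x) \<Longrightarrow> (\<lambda>n. F (X n)) \<longlonglongrightarrow> F x"
  unfolding F_def by (rule ind_left[OF r'_measD r'_bound])

lemma rho_left: "X \<longlonglongrightarrow> x \<Longrightarrow> (\<And>n. X n \<le> x) \<Longrightarrow> (\<lambda>n. rho D (X n)) \<longlonglongrightarrow> rho D x"
  using ind_left[of "\<lambda>_. 1" 1 X x] unfolding rho_int by simp

lemma rho_top: "(\<lambda>n. rho D (real n)) \<longlonglongrightarrow> 1"
proof -
  have "(\<lambda>n. \<integral>y. indicator {y. y < real n} y \<partial>D) \<longlonglongrightarrow> (\<integral>y. (1::real) \<partial>D)"
  proof (rule DC[where B=1 and f="\<lambda>n y. indicator {y. y < real n} y" and g="\<lambda>_. 1"])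
    fix y :: real
    obtain N :: nat where N: "y < real N" using reals_Archimedean2 by blast
    have "\<forall>n\<ge>N. y < real n" using N by (smt (verit) of_nat_le_iff)
    then have "eventually (\<lambda>n. y < real n) sequentially"
      unfolding eventually_sequentially by blast
    then have "eventually (\<lambda>n. indicator {y. y < real n} y = (1::real)) sequentially"
      by eventually_elim auto
    then show "(\<lambda>n. indicator {y. y < real n} y) \<longlonglongrightarrow> (1::real)" by (rule tendsto_eventually)
  qed (auto simp: indicator_def)
  then show ?thesis unfolding rho_int using prob_space.prob_space[OF PD] by simp
qed

lemma F_low:
  assumes "0 \<le> z" "z \<le> x"
  shows "r' x * rho D x + (r' z - r' x) * rho D z \<le> F x"
proof -
  have "r' x * rho D x + (r' z - r' x) * rho D z =
        (\<integral>y. r' x * indicator {y. y < x} y + (r' z - r' x) * indicator {y. y < z} y \<partial>D)"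
    unfolding rho_int using ind_int by simp
  also have "\<dots> \<le> F x" unfolding F_def
  proof (rule integral_mono)
    show "integrable D (\<lambda>y. r' x * indicator {y. y < x} y + (r' z - r' x) * indicator {y. y < z} y)"
      using ind_int by simp
    show "integrable D (\<lambda>y. r' y * indicator {y. y < x} y)" by (rule phi_int)
    fix y assume "y \<in> space D"
    then have y: "0 \<le> y" by (simp add: space_D)
    show "r' x * indicator {y. y < x} y + (r' z - r' x) * indicator {y. y < z} y \<le> r' y * indicator {y. y < x} y"
    proof (cases "y < z")
      case True
      then show ?thesis using assms y r'_antimono[of y z] by (auto simp: indicator_def)
    next
      case False
      then show ?thesis using assms y r'_antimono[of y x] by (auto simp: indicator_def)
    qed
  qed
  finally show ?thesis .
qed

end


context sys begin

lemma r'_seq: "X \<longlonglongrightarrow> x \<Longrightarrow> 0 \<le> x \<Longrightarrow> (\<And>n. 0 \<le> X n) \<Longrightarrow> (\<lambda>n. r' (X n)) \<longlonglongrightarrow> r' x"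
  by (rule continuous_on_tendsto_compose[OF r'_cont]) auto

lemma inv_seq: "(\<lambda>n. a + b * inverse (real (Suc n))) \<longlonglongrightarrow> a"
proof -
  have "(\<lambda>n. a + b * inverse (real (Suc n))) \<longlonglongrightarrow> a + b * 0"
    by (intro tendsto_intros LIMSEQ_inverse_real_of_nat)
  then show ?thesis by simp
qed

lemma xlow_props: "0 \<le> xlow D" "rho D (xlow D) = 0" "\<And>x. xlow D < x \<Longrightarrow> 0 < rho D x"
proof -
  define T where "T = {x. 0 \<le> x \<and> rho D x = 0}"
  have "eventually (\<lambda>n. 1/2 < rho D (real n)) sequentially"
    using order_tendstoD(1)[OF rho_top, of "1/2"] by simp
  then obtain N :: nat where N: "1/2 < rho D (real N)" by (meson eventually_sequentially order_refl)
  have bdd: "x \<le> real N" if "x \<in> T" for x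
  proof (rule ccontr)
    assume "\<not> x \<le> real N"
    then have "rho D (real N) \<le> rho D x" by (intro rho_mono) auto
    then show False using that N by (simp add: T_def)
  qed
  have T0: "0 \<in> T" by (simp add: T_def rho_0)
  have bddT: "bdd_above T" by (rule bdd_aboveI[of _ "real N"]) (rule bdd)
  define l where "l = Sup T"
  have l0: "0 \<le> l" unfolding l_def using T0 bddT by (rule cSup_upper)
  have upper: "x \<le> l" if "x \<in> T" for x unfolding l_def using that bddT by (rule cSup_upper)
  define X where "X n = l + (- l) * inverse (real (Suc n))" for n
  have X: "X \<longlonglongrightarrow> l" unfolding X_def by (rule inv_seq)
  have Xle: "X n \<le> l" for n using l0 by (simp add: X_def)
  have rX: "rho D (X n) = 0" for n
  proof (cases "X n < l")
    case True
    then obtain t where t: "t \<in> T" "X n < t" using less_cSup_iff[of T "X n"] T0 bddT by (auto simp: l_def)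
    then have "rho D (X n) \<le> rho D t" by (intro rho_mono) auto
    then show ?thesis using t rho_nonneg[of "X n"] by (simp add: T_def)
  next
    case False
    then have "X n = l" using Xle[of n] by simp
    then show ?thesis using l0 by (simp add: X_def rho_0)
  qed
  have "(\<lambda>n. rho D (X n)) \<longlonglongrightarrow> rho D l" by (rule rho_left[OF X Xle])
  then have rl: "rho D l = 0" using rX by (simp add: LIMSEQ_const_iff)
  have lT: "l \<in> T" using l0 rl by (simp add: T_def)
  have xl: "xlow D = l" unfolding xlow_def
    by (rule Greatest_equality) (use lT upper in \<open>auto simp: T_def\<close>)
  show "0 \<le> xlow D" using xl l0 by simp
  show "rho D (xlow D) = 0" using xl rl by simp
  fix x assume "xlow D < x"
  then have "x \<notin> T" using upper xl by force
  then have "rho D x \<noteq> 0" using \<open>xlow D < x\<close> l0 xl by (auto simp: T_def)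
  then show "0 < rho D x" using rho_nonneg[of x] by simp
qed

lemma xhigh_cases:
  "(xhigh D = \<infinity> \<and> (\<forall>x\<ge>0. rho D x < 1)) \<or>
   (\<exists>h. xhigh D = ereal h \<and> 0 \<le> h \<and> (\<forall>x>h. rho D x = 1) \<and> (\<forall>x. 0 \<le> x \<and> x < h \<longrightarrow> rho D x < 1))"
proof -
  define S where "S = {x. 0 \<le> x \<and> rho D x = 1}"
  show ?thesis
  proof (cases "S = {}")
    case True
    have "xhigh D = Inf (ereal ` S)" by (simp add: xhigh_def S_def)
    then have "xhigh D = \<infinity>" using True by (simp add: top_ereal_def)
    moreover have "\<forall>x\<ge>0. rho D x < 1" using True rho_le1 by (force simp: S_def less_le)
    ultimately show ?thesis by blast
  next
    case False
    have bdd: "bdd_below S" by (auto simp: S_def intro: bdd_belowI[where m=0])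
    define h where "h = Inf S"
    have "ereal (Inf S) = (INF a\<in>S. ereal a)" by (rule ereal_Inf'[OF bdd False])
    then have xh: "xhigh D = ereal h" by (simp add: xhigh_def S_def h_def)
    have h0: "0 \<le> h" unfolding h_def by (rule cInf_greatest[OF False]) (auto simp: S_def)
    have above: "rho D x = 1" if hx: "h < x" for x
    proof -
      obtain s where s: "s \<in> S" "s < x" using cInf_less_iff[OF False bdd, of x] hx by (auto simp: h_def)
      then have "rho D s \<le> rho D x" by (intro rho_mono) auto
      then show ?thesis using s rho_le1[of x] by (simp add: S_def)
    qed
    have below: "rho D x < 1" if "0 \<le> x" "x < h" for x
    proof -
      have "x \<notin> S" using cInf_lower[OF _ bdd, of x] that by (auto simp: h_def)
      then show ?thesis using that rho_le1[of x] by (auto simp: S_def less_le)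
    qed
    show ?thesis using xh h0 above below by blast
  qed
qed

definition L0 where "L0 = Inf (r' ` {0..})"

lemma L0_le: "0 \<le> x \<Longrightarrow> L0 \<le> r' x"
  unfolding L0_def by (rule cInf_lower) (auto intro: bdd_belowI[where m=0] r'_nonneg)

lemma r'_lim: "(r' \<longlongrightarrow> L0) at_top"
proof (rule order_tendstoI)
  fix y assume y: "y < L0"
  show "eventually (\<lambda>x. y < r' x) at_top"
    using eventually_ge_at_top[of "0::real"] by eventually_elim (use L0_le y in force)
next
  fix y assume "L0 < y"
  have bb: "bdd_below (r' ` {0..})" by (rule bdd_belowI[of _ 0]) (auto intro: r'_nonneg)
  have ne: "r' ` {0..} \<noteq> {}" by auto
  from cInf_less_iff[OF ne bb] \<open>L0 < y\<close> obtain x0 where x0: "x0 \<in> {0..}" "r' x0 < y"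
    unfolding L0_def by auto
  show "eventually (\<lambda>x. r' x < y) at_top"
    using eventually_ge_at_top[of x0]
  proof eventually_elim
    case (elim x)
    then show ?case using x0 r'_antimono[of x0 x] by auto
  qed
qed

lemma Lim_r': "Lim at_top r' = L0"
  by (rule tendsto_Lim[OF _ r'_lim]) simp

end


context sys begin

lemma pick_above:
  assumes l0: "0 \<le> l" and d: "0 < d" and v: "v < r' l"
  shows "\<exists>z. l < z \<and> z \<le> l + d \<and> v < r' z"
proof -
  define X where "X n = l + d * inverse (real (Suc n))" for n
  have X: "X \<longlonglongrightarrow> l" unfolding X_def by (rule inv_seq)
  have X0: "0 \<le> X n" for n using l0 d by (simp add: X_def)
  have "(\<lambda>n. r' (X n)) \<longlonglongrightarrow> r' l" by (rule r'_seq[OF X l0 X0])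
  then have "eventually (\<lambda>n. v < r' (X n)) sequentially" using v by (rule order_tendstoD(1))
  then obtain n where n: "v < r' (X n)" by (meson eventually_sequentially order_refl)
  have "l < X n" using d by (simp add: X_def)
  moreover have "X n \<le> l + d"
  proof -
    have "inverse (real (Suc n)) \<le> 1" by (simp add: inverse_le_1_iff)
    then have "d * inverse (real (Suc n)) \<le> d * 1" using d by (intro mult_left_mono) auto
    then show ?thesis by (simp add: X_def)
  qed
  ultimately show ?thesis using n by blast
qed

lemma exists_bad:
  assumes Hyp: "deriv_at_xhigh r' D < r' (xlow D)"
  shows "\<exists>x0\<ge>0. r' x0 < F x0"
proof -
  define l where "l = xlow D"
  have l0: "0 \<le> l" and rl: "\<And>x. l < x \<Longrightarrow> 0 < rho D x" using xlow_props by (auto simp: l_def)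
  from xhigh_cases show ?thesis
  proof (elim disjE conjE exE)
    assume xi: "xhigh D = \<infinity>" and lt1: "\<forall>x\<ge>0. rho D x < 1"
    have "deriv_at_xhigh r' D = L0" by (simp add: deriv_at_xhigh_def xi Lim_r')
    then have Ll: "L0 < r' l" using Hyp by (simp add: l_def)
    obtain z where z: "l < z" "L0 < r' z" using pick_above[OF l0 zero_less_one Ll] by blast
    define p where "p = rho D z"
    have p0: "0 < p" using rl z by (simp add: p_def)
    define eta where "eta = r' z - L0"
    have eta0: "0 < eta" using z by (simp add: eta_def)
    define th where "th = eta * p / (2 * (r' 0 + 1))"
    have r00: "0 \<le> r' 0" using r'_nonneg by simp
    have th0: "0 < th" using eta0 p0 r00 by (simp add: th_def)
    have ev1: "eventually (\<lambda>n. r' (real n) < L0 + eta / 2) sequentially"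
    proof -
      have "((\<lambda>n. r' (real n)) \<longlongrightarrow> L0) sequentially"
        using filterlim_compose[OF r'_lim filterlim_real_sequentially] by (simp add: comp_def)
      then show ?thesis by (rule order_tendstoD(2)) (use eta0 in simp)
    qed
    have ev2: "eventually (\<lambda>n. 1 - th < rho D (real n)) sequentially"
      by (rule order_tendstoD(1)[OF rho_top]) (use th0 in simp)
    obtain N :: nat where N: "z \<le> real N" using real_arch_simple by blast
    have ev3: "eventually (\<lambda>n. z \<le> real n) sequentially"
      using eventually_ge_at_top[of N]
    proof eventually_elim
      case (elim n)
      then have "real N \<le> real n" by simp
      then show ?case using N by linarith
    qed
    from eventually_conj[OF ev1 eventually_conj[OF ev2 ev3]]
    obtain n where n: "r' (real n) < L0 + eta / 2 \<and> 1 - th < rho D (real n) \<and> z \<le> real n"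
      using eventually_happens'[OF trivial_limit_sequentially] by blast
    then have n1: "r' (real n) < L0 + eta / 2" and n2: "1 - th < rho D (real n)" and n3: "z \<le> real n"
      by auto
    define x where "x = real n"
    define q where "q = rho D x"
    have z0: "0 \<le> z" using l0 z by simp
    have Fl: "r' x * q + (r' z - r' x) * p \<le> F x" using F_low[OF z0] n3 by (simp add: x_def q_def p_def)
    have "eta / 2 < r' z - r' x" using n1 unfolding x_def eta_def by (simp add: field_simps)
    then have A: "eta / 2 * p < (r' z - r' x) * p"
      using p0 by (intro mult_strict_right_mono) auto
    have rx0: "0 \<le> r' x" "r' x \<le> r' 0 + 1" using r'_nonneg[of x] r'_antimono[of 0 x] by (auto simp: x_def)
    have q1: "0 \<le> 1 - q" "1 - q < th" using rho_le1[of x] n2 by (auto simp: q_def x_def)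
    have "r' x * (1 - q) \<le> (r' 0 + 1) * (1 - q)" using rx0 q1 by (intro mult_right_mono) auto
    also have "\<dots> \<le> (r' 0 + 1) * th" using q1 r00 by (intro mult_left_mono) auto
    also have "\<dots> = eta / 2 * p" using r00 by (simp add: th_def field_simps)
    finally have B: "r' x * (1 - q) \<le> eta / 2 * p" .
    have "r' x * (1 - q) = r' x - r' x * q" by (simp add: algebra_simps)
    then have "r' x < F x" using Fl A B by linarith
    then show ?thesis using x_def by (intro exI[of _ x]) auto
  next
    fix h assume xh: "xhigh D = ereal h" and h0: "0 \<le> h" and above: "\<forall>x>h. rho D x = 1"
    have "deriv_at_xhigh r' D = r' h" by (simp add: deriv_at_xhigh_def xh)
    then have hl: "r' h < r' l" using Hyp by (simp add: l_def)
    have lh: "l < h"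
    proof (rule ccontr)
      assume "\<not> l < h"
      then have "r' l \<le> r' h" using h0 r'_antimono[of h l] by simp
      then show False using hl by simp
    qed
    have hl0: "0 < h - l" using lh by simp
    from pick_above[OF l0 hl0 hl] obtain z where z: "l < z" "z \<le> l + (h - l)" "r' h < r' z" by blast
    define p where "p = rho D z"
    have p0: "0 < p" using rl z by (simp add: p_def)
    define x where "x = h + 1"
    have q: "rho D x = 1" using above by (simp add: x_def)
    have z0: "0 \<le> z" "z \<le> x" using l0 z by (auto simp: x_def)
    have Fl: "r' x * 1 + (r' z - r' x) * p \<le> F x" using F_low[OF z0] q by (simp add: p_def)
    have "r' x \<le> r' h" using h0 r'_antimono[of h x] by (simp add: x_def)
    then have "0 < (r' z - r' x) * p" using z p0 by simp
    then have "r' x < F x" using Fl by simp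
    then show ?thesis using h0 x_def by (intro exI[of _ x]) auto
  qed
qed

lemma cs_exists:
  assumes Hyp: "deriv_at_xhigh r' D < r' (xlow D)"
  shows "\<exists>cs. cs \<in> cstar_set D r' \<and> (\<forall>y\<in>cstar_set D r'. y \<le> cs)"
proof -
  define C where "C = cstar_set D r'"
  have C: "C = {x. 0 \<le> x \<and> F x \<le> r' x}" by (simp add: C_def cstar_eq)
  have C0: "0 \<in> C" using F_0 r'_nonneg by (simp add: C)
  have down: "x \<in> C" if "y \<in> C" "0 \<le> x" "x \<le> y" for x y
  proof -
    have "F x \<le> F y" using that by (intro F_mono) auto
    also have "\<dots> \<le> r' y" using that by (simp add: C)
    also have "\<dots> \<le> r' x" using that by (intro r'_antimono) auto
    finally show ?thesis using that by (simp add: C)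
  qed
  obtain x0 where x0: "0 \<le> x0" "r' x0 < F x0" using exists_bad[OF Hyp] by blast
  have bnd: "y \<le> x0" if "y \<in> C" for y
  proof (rule ccontr)
    assume "\<not> y \<le> x0"
    then have "x0 \<in> C" using down[OF that x0(1)] by simp
    then show False using x0 by (simp add: C)
  qed
  have bddC: "bdd_above C" by (rule bdd_aboveI[of _ x0]) (rule bnd)
  define cs where "cs = Sup C"
  have cs0: "0 \<le> cs" unfolding cs_def using C0 bddC by (rule cSup_upper)
  have upper: "\<forall>y\<in>C. y \<le> cs" unfolding cs_def using bddC by (auto intro: cSup_upper)
  have "cs \<in> C"
  proof (cases "cs = 0")
    case True then show ?thesis using C0 by simp
  next
    case False
    then have csp: "0 < cs" using cs0 by simp
    define X where "X n = cs + (- cs) * inverse (real (Suc n))" for n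
    have X: "X \<longlonglongrightarrow> cs" unfolding X_def by (rule inv_seq)
    have Xb: "0 \<le> X n" "X n \<le> cs" "X n < cs" for n
    proof -
      have "inverse (real (Suc n)) \<le> 1" by (simp add: inverse_le_1_iff)
      then have "cs * inverse (real (Suc n)) \<le> cs * 1" using cs0 by (intro mult_left_mono) auto
      then show "0 \<le> X n" by (simp add: X_def)
      show "X n < cs" using csp by (simp add: X_def)
      then show "X n \<le> cs" by simp
    qed
    have XC: "X n \<in> C" for n
    proof -
      obtain y where y: "y \<in> C" "X n < y" using less_cSup_iff[of C "X n"] C0 bddC Xb(3)[of n]
        by (auto simp: cs_def)
      show ?thesis by (rule down[OF y(1) Xb(1)]) (use y in simp)
    qed
    have "F cs \<le> r' cs"
    proof (rule tendsto_le[OF _ r'_seq[OF X cs0 Xb(1)] F_left[OF X Xb(2)]])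
      show "eventually (\<lambda>n. F (X n) \<le> r' (X n)) sequentially" using XC by (simp add: C)
    qed simp
    then show ?thesis using cs0 by (simp add: C)
  qed
  then show ?thesis using upper unfolding C_def by blast
qed

end


context sys begin

lemma choose_a:
  assumes Hyp: "deriv_at_xhigh r' D < r' (xlow D)" and bad: "r' c < F c"
  shows "\<exists>a. 0 < a \<and> a \<le> c \<and> rho D a < 1 \<and> r' a < F c"
proof (cases "rho D c < 1")
  case True
  have "c \<noteq> 0" using bad F_0 r'_nonneg[of 0] by auto
  then show ?thesis using True bad c0 by (intro exI[of _ c]) auto
next
  case False
  then have rc: "rho D c = 1" using rho_le1[of c] by simp
  define l where "l = xlow D"
  have l0: "0 \<le> l" and rl: "\<And>x. l < x \<Longrightarrow> 0 < rho D x" using xlow_props by (auto simp: l_def)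
  from xhigh_cases show ?thesis
  proof (elim disjE conjE exE)
    assume "\<forall>x\<ge>0. rho D x < 1"
    then show ?thesis using rc c0 by auto
  next
    fix h assume xh: "xhigh D = ereal h" and h0: "0 \<le> h" and above: "\<forall>x>h. rho D x = 1"
      and below: "\<forall>x. 0 \<le> x \<and> x < h \<longrightarrow> rho D x < 1"
    have hc: "h \<le> c" using below rc c0 by force
    have "deriv_at_xhigh r' D = r' h" by (simp add: deriv_at_xhigh_def xh)
    then have hl: "r' h < r' l" using Hyp by (simp add: l_def)
    have lh: "l < h"
    proof (rule ccontr)
      assume "\<not> l < h"
      then have "r' l \<le> r' h" using h0 r'_antimono[of h l] by simp
      then show False using hl by simp
    qed
    have hl0: "0 < h - l" using lh by simp
    from pick_above[OF l0 hl0 hl] obtain z where z: "l < z" "z \<le> l + (h - l)" "r' h < r' z" by blast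
    define p where "p = rho D z"
    have p0: "0 < p" using rl z by (simp add: p_def)
    have p1: "p \<le> 1" using rho_le1 by (simp add: p_def)
    define X where "X n = h + (c - h) * inverse (real (Suc n))" for n
    have X: "X \<longlonglongrightarrow> h" unfolding X_def by (rule inv_seq)
    have Xb: "h \<le> X n" "X n \<le> c" for n
    proof -
      have "inverse (real (Suc n)) \<le> 1" by (simp add: inverse_le_1_iff)
      then have "(c - h) * inverse (real (Suc n)) \<le> (c - h) * 1" using hc by (intro mult_left_mono) auto
      then show "X n \<le> c" by (simp add: X_def)
      show "h \<le> X n" using hc by (simp add: X_def)
    qed
    have rX: "rho D (X n) = 1" for n
    proof (cases "h < X n")
      case True then show ?thesis using above by simp
    next
      case False
      then have "X n = h" using Xb(1)[of n] by simp
      then have "h = c \<or> X n = c" using hc by (auto simp: X_def)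
      then show ?thesis using rc \<open>X n = h\<close> by auto
    qed
    define g where "g x = (1 - p) * r' x + p * r' z" for x
    have "(\<lambda>n. g (X n)) \<longlonglongrightarrow> g h"
      unfolding g_def using h0 Xb by (intro tendsto_intros r'_seq[OF X]) (auto intro: order_trans)
    moreover have "r' h < g h"
    proof -
      have "p * r' h < p * r' z" using p0 z by simp
      then show ?thesis by (simp add: g_def algebra_simps)
    qed
    ultimately have "eventually (\<lambda>n. r' h < g (X n)) sequentially" by (rule order_tendstoD(1))
    then obtain n where n: "r' h < g (X n)" using eventually_happens'[OF trivial_limit_sequentially] by blast
    have z0: "0 \<le> z" "z \<le> X n" using l0 z Xb(1)[of n] by auto
    have "r' (X n) * 1 + (r' z - r' (X n)) * p \<le> F (X n)" using F_low[OF z0] rX[of n] by (simp add: p_def)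
    also have "\<dots> \<le> F c" using Xb(2) by (rule F_mono)
    finally have "g (X n) \<le> F c" by (simp add: g_def algebra_simps)
    then have Fh: "r' h < F c" using n by simp
    have hp: "0 < h" using lh l0 by simp
    define Y where "Y n = h + (- h / 2) * inverse (real (Suc n))" for n
    have Y: "Y \<longlonglongrightarrow> h" unfolding Y_def by (rule inv_seq)
    have Yb: "h / 2 \<le> Y n" "Y n < h" for n
    proof -
      have "inverse (real (Suc n)) \<le> 1" by (simp add: inverse_le_1_iff)
      then have "h / 2 * inverse (real (Suc n)) \<le> h / 2 * 1" using hp by (intro mult_left_mono) auto
      then show "h / 2 \<le> Y n" by (simp add: Y_def)
      show "Y n < h" using hp by (simp add: Y_def)
    qed
    have Y0: "0 \<le> Y n" for n using Yb(1)[of n] hp by linarith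
    have "(\<lambda>n. r' (Y n)) \<longlonglongrightarrow> r' h" by (rule r'_seq[OF Y h0 Y0])
    then have "eventually (\<lambda>n. r' (Y n) < F c) sequentially" using Fh by (rule order_tendstoD(2))
    then obtain m where m: "r' (Y m) < F c" using eventually_happens'[OF trivial_limit_sequentially] by blast
    have "0 < Y m" using Yb(1)[of m] hp by linarith
    moreover have "Y m \<le> c" using Yb(2)[of m] hc by simp
    moreover have "rho D (Y m) < 1" using below Y0[of m] Yb(2)[of m] by auto
    ultimately show ?thesis using m by blast
  qed
qed

definition H where "H d = (\<integral>y. r' (y + d) * indicator {y. y < c - d} y \<partial>D)" for d

lemma H_meas: "0 \<le> d \<Longrightarrow> (\<lambda>y. r' (y + d) * indicator {y. y < c - d} y) \<in> borel_measurable D"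
proof -
  assume d: "0 \<le> d"
  have [measurable]: "(\<lambda>y. r' (y + d)) \<in> borel_measurable D"
    by (rule r'_meas) (use d in \<open>auto simp: space_D\<close>)
  show ?thesis by measurable
qed

lemma H_bound: "0 \<le> d \<Longrightarrow> 0 \<le> y \<Longrightarrow> \<bar>r' (y + d) * indicator {y. y < c - d} y\<bar> \<le> r' 0"
  using r'_bound[of "y + d"] by (auto simp: indicator_def)

lemma choose_delta:
  assumes a: "0 < a" "r' a < F c"
  shows "\<exists>d. 0 < d \<and> d \<le> a \<and> r' (a - d) < H d"
proof -
  define X where "X n = 0 + a * inverse (real (Suc n))" for n
  have X: "X \<longlonglongrightarrow> 0" unfolding X_def by (rule inv_seq)
  have Xb: "0 < X n" "X n \<le> a" for n
  proof -
    have "inverse (real (Suc n)) \<le> 1" by (simp add: inverse_le_1_iff)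
    then have "a * inverse (real (Suc n)) \<le> a * 1" using a by (intro mult_left_mono) auto
    then show "X n \<le> a" by (simp add: X_def)
    show "0 < X n" using a by (simp add: X_def)
  qed
  have HX: "(\<lambda>n. H (X n)) \<longlonglongrightarrow> F c"
    unfolding H_def F_def
  proof (rule DC[where B="r' 0" and f="\<lambda>n y. r' (y + X n) * indicator {y. y < c - X n} y"])
    show "\<And>n. (\<lambda>y. r' (y + X n) * indicator {y. y < c - X n} y) \<in> borel_measurable D"
      using Xb by (intro H_meas) (auto intro: less_imp_le)
    show "(\<lambda>y. r' y * indicator {y. y < c} y) \<in> borel_measurable D" by (rule phi_meas)
    show "\<And>n y. 0 \<le> y \<Longrightarrow> \<bar>r' (y + X n) * indicator {y. y < c - X n} y\<bar> \<le> r' 0"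
      using Xb by (intro H_bound) (auto intro: less_imp_le)
    fix y :: real assume y: "0 \<le> y"
    show "(\<lambda>n. r' (y + X n) * indicator {y. y < c - X n} y) \<longlonglongrightarrow> r' y * indicator {y. y < c} y"
    proof (cases "y < c")
      case True
      have cX: "(\<lambda>n. c - X n) \<longlonglongrightarrow> c - 0" by (intro tendsto_intros X)
      have ev: "eventually (\<lambda>n. y < c - X n) sequentially"
        using order_tendstoD(1)[OF cX] True by simp
      have yX: "(\<lambda>n. y + X n) \<longlonglongrightarrow> y + 0" by (intro tendsto_intros X)
      have "(\<lambda>n. r' (y + X n)) \<longlonglongrightarrow> r' y"
        using r'_seq[OF yX] y Xb by (simp add: less_imp_le add_nonneg_nonneg)
      moreover have "eventually (\<lambda>n. r' (y + X n) = r' (y + X n) * indicator {y. y < c - X n} y) sequentially"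
        using ev by eventually_elim simp
      ultimately have "(\<lambda>n. r' (y + X n) * indicator {y. y < c - X n} y) \<longlonglongrightarrow> r' y"
        by (rule Lim_transform_eventually)
      then show ?thesis using True by simp
    next
      case False
      then have e: "r' (y + X n) * indicator {y. y < c - X n} y = 0" for n using Xb[of n] by (auto simp: indicator_def)
      have "indicator {y. y < c} y = (0::real)" using False by simp
      then show ?thesis by (simp only: e) simp
    qed
  qed
  have aX: "(\<lambda>n. a - X n) \<longlonglongrightarrow> a - 0" by (intro tendsto_intros X)
  have rX: "(\<lambda>n. r' (a - X n)) \<longlonglongrightarrow> r' a" using r'_seq[OF aX] a Xb by simp
  define m where "m = (r' a + F c) / 2"
  have m1: "m < F c" "r' a < m" using a by (auto simp: m_def)
  have "eventually (\<lambda>n. m < H (X n)) sequentially" using order_tendstoD(1)[OF HX m1(1)] .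
  moreover have "eventually (\<lambda>n. r' (a - X n) < m) sequentially" using order_tendstoD(2)[OF rX m1(2)] .
  ultimately have "eventually (\<lambda>n. r' (a - X n) < H (X n)) sequentially" by eventually_elim simp
  then obtain n where n: "r' (a - X n) < H (X n)" using eventually_happens'[OF trivial_limit_sequentially] by blast
  then show ?thesis using Xb[of n] by blast
qed

end


context sys begin

lemma r_bound01: "0 \<le> x \<Longrightarrow> x \<le> c \<Longrightarrow> \<bar>r x\<bar> \<le> r c"
  using r_nonneg r_mono'[of x c] by auto

lemma pair_policy:
  assumes d: "0 < d" "d \<le> a" "a \<le> c" and ra: "rho D a < 1" and Hd: "r' (a - d) < H d"
  shows "\<exists>f. admissible D c f \<and> ereal R < throughput D r f"
proof -
  define sv where "sv x = (if a \<le> x then d else 0)" for x :: real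
  define ind where "ind x = (if a \<le> x then 1 else 0 :: real)" for x :: real
  define p where "p t w = (if t = 0 then 0 else if odd t then min (w t) c - sv (w t)
                           else min (sv (w (t - 1)) + w t) c)" for t and w :: "nat \<Rightarrow> real"
  define bt where "bt t w = (if t = 0 then 0 else if odd t then min (w t) c
                           else min (sv (w (t - 1)) + w t) c)" for t and w :: "nat \<Rightarrow> real"
  have sv_meas[measurable]: "sv \<in> borel_measurable borel" unfolding sv_def by measurable
  have ind_meas[measurable]: "ind \<in> borel_measurable borel" unfolding ind_def by measurable
  have svD[measurable]: "sv \<in> borel_measurable D" by (rule meas_D) simp
  have indD[measurable]: "ind \<in> borel_measurable D" by (rule meas_D) simp
  have pw: "power p t w = p t w" for t w by (simp add: power_def p_def)
  have bat: "battery p c w t = bt t w" for w t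
  proof (induction t)
    case 0 then show ?case by (simp add: bt_def)
  next
    case (Suc t)
    have "battery p c w (Suc t) = min (bt t w - p t w + w (Suc t)) c" by (simp add: Suc.IH pw)
    also have "\<dots> = bt (Suc t) w"
    proof (cases "t = 0")
      case True then show ?thesis by (simp add: bt_def p_def)
    next
      case False
      show ?thesis
      proof (cases "odd t")
        case True then show ?thesis using False by (simp add: bt_def p_def)
      next
        case ev: False
        then show ?thesis using False by (simp add: bt_def p_def)
      qed
    qed
    finally show ?case .
  qed
  have odd_low: "0 \<le> min x c - sv x" if "0 \<le> x" for x
    using that d c0 by (auto simp: sv_def)
  have odd_up: "min x c - sv x \<le> c" for x using d by (auto simp: sv_def)
  have pb: "0 \<le> p t w \<and> p t w \<le> bt t w" if w: "w \<in> space M" for t w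
  proof -
    have "0 \<le> w t" using w by (simp add: space_M)
    moreover have "0 \<le> sv (w t)" "0 \<le> sv (w (t - 1))" using d by (auto simp: sv_def)
    ultimately show ?thesis using odd_low[of "w t"] c0 by (auto simp: p_def bt_def)
  qed
  have adm: "admissible D c p"
    unfolding admissible_def online_policy_def
  proof (intro conjI allI ballI impI)
    fix t
    show "p t \<in> borel_measurable M" unfolding p_def by measurable
    fix w w' assume "w \<in> space M" "w' \<in> space M" and ag: "\<forall>i\<in>{1..t}. w i = w' i"
    show "p t w = p t w'"
    proof (cases "t = 0")
      case False
      then have "w t = w' t" using ag by auto
      moreover have "odd t \<or> w (t - 1) = w' (t - 1)" using ag False by (cases "t = 1") auto
      ultimately show ?thesis by (auto simp: p_def)
    qed (simp add: p_def)
  next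
    fix w t assume "w \<in> space M"
    then show "0 \<le> power p t w" "power p t w \<le> battery p c w t" using pb by (auto simp: pw bat)
  qed
  define A where "A = (\<integral>x. r (min x c - sv x) \<partial>D)"
  define Gd where "Gd = (\<integral>x. r (min (d + x) c) \<partial>D)"
  define pa where "pa = (\<integral>x. ind x \<partial>D)"
  have mA[measurable]: "(\<lambda>x. r (min x c - sv x)) \<in> borel_measurable D"
    by (rule r_meas) (use odd_low in \<open>auto simp: space_D\<close>)
  have bA: "\<bar>r (min x c - sv x)\<bar> \<le> r c" if "0 \<le> x" for x
    using odd_low[OF that] odd_up[of x] by (intro r_bound01)
  have mG[measurable]: "(\<lambda>x. r (min (d + x) c)) \<in> borel_measurable D"
    by (rule r_meas) (use d c0 in \<open>auto simp: space_D\<close>)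
  have bG: "\<bar>r (min (d + x) c)\<bar> \<le> r c" if "0 \<le> x" for x
    using that d c0 by (intro r_bound01) auto
  have bI: "\<bar>ind x\<bar> \<le> 1" for x by (simp add: ind_def)
  have iA: "integrable D (\<lambda>x. r (min x c - sv x))" by (rule int_D[OF mA bA])
  have iG: "integrable D (\<lambda>x. r (min (d + x) c))" by (rule int_D[OF mG bG])
  have iRD: "integrable D (\<lambda>x. r (min x c))" by (rule int_D[OF rmin_meas rmin_bound])
  have iI: "integrable D ind" by (rule int_D[OF indD bI])
  have pa_eq: "pa = 1 - rho D a"
  proof -
    have "pa = (\<integral>x. 1 - indicator {y. y < a} x \<partial>D)" unfolding pa_def
      by (rule Bochner_Integration.integral_cong) (auto simp: ind_def indicator_def)
    also have "\<dots> = (\<integral>x. (1::real) \<partial>D) - (\<integral>x. indicator {y. y < a} x \<partial>D)"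
      by (rule Bochner_Integration.integral_diff[OF finite_measure.integrable_const[OF pfm[OF PD]] ind_int])
    also have "\<dots> = 1 - rho D a" using prob_space.prob_space[OF PD] by (simp add: rho_int)
    finally show ?thesis .
  qed
  have pa0: "0 < pa" using ra pa_eq by simp
  have Eodd: "(\<integral>w. r (power p t w) \<partial>M) = A" if "odd t" for t
  proof -
    have "(\<integral>w. r (power p t w) \<partial>M) = (\<integral>w. r (min (w t) c - sv (w t)) \<partial>M)"
      using that by (cases "t = 0") (auto simp: pw p_def)
    also have "\<dots> = A" unfolding A_def by (rule coord_int[OF mA bA])
    finally show ?thesis .
  qed
  define Bv where "Bv = pa * Gd + (1 - pa) * R"
  have Eeven: "(\<integral>w. r (power p t w) \<partial>M) = Bv" if "even t" "t \<noteq> 0" for t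
  proof -
    have tt: "t - 1 \<noteq> t" using that by simp
    have e: "r (power p t w) = ind (w (t - 1)) * r (min (d + w t) c) + r (min (w t) c) - ind (w (t - 1)) * r (min (w t) c)" for w
      using that by (simp add: pw p_def ind_def sv_def)
    have mu[measurable]: "(\<lambda>w. ind (w (t - 1))) \<in> borel_measurable M"
      using measurable_comp[OF comp_meas indD] by (simp add: comp_def)
    have mg1[measurable]: "(\<lambda>w. r (min (d + w t) c)) \<in> borel_measurable M"
      using measurable_comp[OF comp_meas mG] by (simp add: comp_def)
    have mg2[measurable]: "(\<lambda>w. r (min (w t) c)) \<in> borel_measurable M"
      using measurable_comp[OF comp_meas rmin_meas] by (simp add: comp_def)
    have spt: "0 \<le> w i" if "w \<in> space M" for w i using that by (simp add: space_M)
    have i1: "integrable M (\<lambda>w. ind (w (t - 1)) * r (min (d + w t) c))"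
    proof (rule int_M[where B="r c"])
      fix w assume "w \<in> space M"
      then show "\<bar>ind (w (t - 1)) * r (min (d + w t) c)\<bar> \<le> r c"
        using bG[OF spt] bI r_nonneg c0 by (auto simp: ind_def)
    qed measurable
    have i2: "integrable M (\<lambda>w. r (min (w t) c))"
      by (rule int_M[where B="r c"]) (use rmin_bound spt in auto)
    have i3: "integrable M (\<lambda>w. ind (w (t - 1)) * r (min (w t) c))"
    proof (rule int_M[where B="r c"])
      fix w assume "w \<in> space M"
      then show "\<bar>ind (w (t - 1)) * r (min (w t) c)\<bar> \<le> r c"
        using rmin_bound[OF spt] r_nonneg c0 by (auto simp: ind_def)
    qed measurable
    have uj: "ind ((w(t := x)) (t - 1)) = ind (w (t - 1))" for w x using tt by simp
    have Iu: "(\<integral>w. ind (w (t - 1)) \<partial>M) = pa" unfolding pa_def by (rule coord_int[OF indD bI])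
    have "(\<integral>w. r (power p t w) \<partial>M) = (\<integral>w. ind (w (t - 1)) * r (min (d + w t) c) \<partial>M)
       + (\<integral>w. r (min (w t) c) \<partial>M) - (\<integral>w. ind (w (t - 1)) * r (min (w t) c) \<partial>M)"
      unfolding e using i1 i2 i3 by simp
    also have "(\<integral>w. ind (w (t - 1)) * r (min (d + w t) c) \<partial>M) = pa * Gd"
      unfolding Iu[symmetric] Gd_def by (rule IND[where Bu=1 and Bh="r c"]) (use bI bG uj in auto)
    also have "(\<integral>w. ind (w (t - 1)) * r (min (w t) c) \<partial>M) = pa * R"
      unfolding Iu[symmetric] R_def by (rule IND[where Bu=1 and Bh="r c"]) (use bI rmin_bound uj rmin_meas in auto)
    also have "(\<integral>w. r (min (w t) c) \<partial>M) = R"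
      unfolding R_def by (rule coord_int[OF rmin_meas rmin_bound])
    finally show ?thesis by (simp add: Bv_def algebra_simps)
  qed
  define S where "S n = (\<Sum>t=1..n. \<integral>w. r (power p t w) \<partial>M)" for n
  have S2: "2 * S n = real n * (A + Bv) + (if odd n then A - Bv else 0)" for n
  proof (induction n)
    case 0 then show ?case by (simp add: S_def)
  next
    case (Suc n)
    have SS: "S (Suc n) = S n + (\<integral>w. r (power p (Suc n) w) \<partial>M)" by (simp add: S_def)
    then show ?case
    proof (cases "odd n")
      case True
      then have "even (Suc n)" by simp
      then have "(\<integral>w. r (power p (Suc n) w) \<partial>M) = Bv" by (intro Eeven) auto
      then show ?thesis using Suc.IH True SS by (simp add: algebra_simps)
    next
      case False
      then have "odd (Suc n)" by simp
      then have "(\<integral>w. r (power p (Suc n) w) \<partial>M) = A" by (rule Eodd)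
      then show ?thesis using Suc.IH False SS by (simp add: algebra_simps)
    qed
  qed
  have gapA: "R - A \<le> pa * (r' (a - d) * d)"
  proof -
    have "R - A = (\<integral>x. r (min x c) - r (min x c - sv x) \<partial>D)"
      unfolding R_def A_def using iRD iA by simp
    also have "\<dots> \<le> (\<integral>x. ind x * (r' (a - d) * d) \<partial>D)"
    proof (rule integral_mono)
      show "integrable D (\<lambda>x. r (min x c) - r (min x c - sv x))" using iRD iA by simp
      show "integrable D (\<lambda>x. ind x * (r' (a - d) * d))" using iI by simp
      fix x assume "x \<in> space D"
      then have x0: "0 \<le> x" by (simp add: space_D)
      show "r (min x c) - r (min x c - sv x) \<le> ind x * (r' (a - d) * d)"
      proof (cases "a \<le> x")
        case True
        define m where "m = min x c"
        have am: "a \<le> m" using True d by (simp add: m_def)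
        have "r m - r (m - d) \<le> r' (m - d) * (m - (m - d))" by (rule tangent_up) (use am d in auto)
        also have "\<dots> = r' (m - d) * d" by simp
        also have "\<dots> \<le> r' (a - d) * d" using am d by (intro mult_right_mono r'_antimono) auto
        finally show ?thesis using True by (simp add: m_def sv_def ind_def)
      next
        case False then show ?thesis by (simp add: sv_def ind_def)
      qed
    qed
    also have "\<dots> = pa * (r' (a - d) * d)" by (simp add: pa_def)
    finally show ?thesis .
  qed
  have gapG: "d * H d \<le> Gd - R"
  proof -
    have "d * H d = (\<integral>x. d * (r' (x + d) * indicator {y. y < c - d} x) \<partial>D)" by (simp add: H_def)
    also have "\<dots> \<le> (\<integral>x. r (min (d + x) c) - r (min x c) \<partial>D)"
    proof (rule integral_mono)
      show "integrable D (\<lambda>x. d * (r' (x + d) * indicator {y. y < c - d} x))"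
        using int_D[OF H_meas H_bound] d by simp
      show "integrable D (\<lambda>x. r (min (d + x) c) - r (min x c))" using iG iRD by simp
      fix x assume "x \<in> space D"
      then have x0: "0 \<le> x" by (simp add: space_D)
      show "d * (r' (x + d) * indicator {y. y < c - d} x) \<le> r (min (d + x) c) - r (min x c)"
      proof (cases "x < c - d")
        case True
        have "r' (x + d) * ((x + d) - x) \<le> r (x + d) - r x" by (rule tangent_low) (use x0 d in auto)
        moreover have "min x c = x" "min (d + x) c = x + d" using True d by auto
        ultimately show ?thesis using True by (simp add: algebra_simps)
      next
        case False
        have "r (min x c) \<le> r (min (d + x) c)" using x0 d c0 by (intro r_mono') auto
        then show ?thesis using False by simp
      qed
    qed
    also have "\<dots> = Gd - R" unfolding Gd_def R_def using iG iRD by simp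
    finally show ?thesis .
  qed
  have gap: "R < (A + Bv) / 2"
  proof -
    have "pa * (r' (a - d) * d) < pa * (d * H d)" using pa0 d Hd by (simp add: mult.commute)
    also have "\<dots> \<le> pa * (Gd - R)" using pa0 gapG by (intro mult_left_mono) auto
    finally have "R - A < pa * (Gd - R)" using gapA by linarith
    then show ?thesis by (simp add: Bv_def algebra_simps)
  qed
  have lim: "(\<lambda>n. S n / real n) \<longlonglongrightarrow> (A + Bv) / 2"
  proof -
    define e where "e n = (if odd n then (A - Bv) / 2 else 0) * inverse (real n)" for n
    have eq: "S n / real n = (A + Bv) / 2 + e n" if "n \<ge> 1" for n
    proof -
      have "S n = (real n * (A + Bv) + (if odd n then A - Bv else 0)) / 2" using S2[of n] by simp
      then show ?thesis using that by (simp add: e_def field_simps)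
    qed
    have e0: "e \<longlonglongrightarrow> 0"
    proof (rule Lim_null_comparison)
      show "eventually (\<lambda>n. norm (e n) \<le> \<bar>(A - Bv) / 2\<bar> * inverse (real n)) sequentially"
        by (intro always_eventually allI) (auto simp: e_def abs_mult)
      show "(\<lambda>n. \<bar>(A - Bv) / 2\<bar> * inverse (real n)) \<longlonglongrightarrow> 0"
        using tendsto_mult_right_zero[OF lim_inverse_n] by simp
    qed
    have "(\<lambda>n. (A + Bv) / 2 + e n) \<longlonglongrightarrow> (A + Bv) / 2 + 0" by (intro tendsto_intros e0)
    then have "(\<lambda>n. (A + Bv) / 2 + e n) \<longlonglongrightarrow> (A + Bv) / 2" by simp
    moreover have "eventually (\<lambda>n. (A + Bv) / 2 + e n = S n / real n) sequentially"
      using eventually_ge_at_top[of "1::nat"] by eventually_elim (simp add: eq)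
    ultimately show ?thesis by (rule Lim_transform_eventually)
  qed
  have "throughput D r p = ereal ((A + Bv) / 2)"
    unfolding throughput_def
  proof (rule lim_imp_Liminf)
    show "((\<lambda>n. ereal ((\<Sum>t=1..n. \<integral>w. r (power p t w) \<partial>M) / real n)) \<longlongrightarrow> ereal ((A + Bv) / 2)) sequentially"
      using tendsto_ereal[OF lim] by (simp add: S_def)
  qed simp
  then show ?thesis using adm gap by (intro exI[of _ p]) simp
qed

end


context sys begin

lemma part1:
  assumes Hyp: "deriv_at_xhigh r' D < r' (xlow D)"
  shows "\<exists>cs. cs \<in> cstar_set D r' \<and> (\<forall>y\<in>cstar_set D r'. y \<le> cs) \<and> (greedy_optimal D r c \<longleftrightarrow> c \<le> cs)"
proof -
  obtain cs where cs: "cs \<in> cstar_set D r'" "\<forall>y\<in>cstar_set D r'. y \<le> cs" using cs_exists[OF Hyp] by blast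
  have csF: "0 \<le> cs" "F cs \<le> r' cs" using cs(1) by (auto simp: cstar_eq)
  have "greedy_optimal D r c \<longleftrightarrow> c \<le> cs"
  proof
    assume c: "c \<le> cs"
    have "F c \<le> F cs" using c by (rule F_mono)
    also have "\<dots> \<le> r' cs" by (rule csF(2))
    also have "\<dots> \<le> r' c" using c by (rule r'_antimono[OF c0])
    finally show "greedy_optimal D r c" by (rule greedy_opt_if)
  next
    assume g: "greedy_optimal D r c"
    show "c \<le> cs"
    proof (rule ccontr)
      assume "\<not> c \<le> cs"
      then have "c \<notin> cstar_set D r'" using cs(2) by force
      then have bad: "r' c < F c" using c0 by (auto simp: cstar_eq)
      obtain a where a: "0 < a" "a \<le> c" "rho D a < 1" "r' a < F c" using choose_a[OF Hyp bad] by blast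
      obtain d where d: "0 < d" "d \<le> a" "r' (a - d) < H d" using choose_delta[OF a(1) a(4)] by blast
      obtain f where f: "admissible D c f" "ereal R < throughput D r f"
        using pair_policy[OF d(1) d(2) a(2) a(3) d(3)] by blast
      show False using greedy_not_opt_if[OF f] g by simp
    qed
  qed
  then show ?thesis using cs by blast
qed

end

lemma half_le: "(a / 2 \<le> b / 2) = (a \<le> (b::real))"
  by (simp add: divide_le_cancel)

lemma main_general:
  fixes D :: "real measure" and c :: real
  assumes "prob_space D" and "sets D = sets (restrict_space borel {0..})" and "0 \<le> c"
    and "(\<forall>x\<ge>0. 0 \<le> r x) \<and> mono_on {0..} r \<and> concave_on {0..} r \<and>
            (\<forall>x\<ge>0. (r has_real_derivative r' x) (at x within {0..})) \<and>
            continuous_on {0..} r' \<and> deriv_at_xhigh r' D < r' (xlow D)"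
  shows "\<exists>cs. cs \<in> cstar_set D r' \<and> (\<forall>y\<in>cstar_set D r'. y \<le> cs) \<and>
                   (greedy_optimal D r c \<longleftrightarrow> c \<le> cs)"
proof -
  have R: "rfun r r'" unfolding rfun_def using assms(4) by blast
  have Dd: "distD D" unfolding distD_def using assms(1,2) by blast
  have "sys r r' D c" unfolding sys_def sys_axioms_def using R Dd assms(3) by blast
  then interpret sys r r' D c .
  show ?thesis using part1 assms(4) by blast
qed

theorem theorem1:
  fixes D :: "real measure" and c :: real
  assumes "prob_space D"
    and "sets D = sets (restrict_space borel {0..})"
    and "0 \<le> c"
  shows "(\<forall>r r'.
            (\<forall>x\<ge>0. 0 \<le> r x) \<and> mono_on {0..} r \<and> concave_on {0..} r \<and>
            (\<forall>x\<ge>0. (r has_real_derivative r' x) (at x within {0..})) \<and>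
            continuous_on {0..} r' \<and>
            deriv_at_xhigh r' D < r' (xlow D)
          \<longrightarrow> (\<exists>cs. cs \<in> cstar_set D r' \<and> (\<forall>y\<in>cstar_set D r'. y \<le> cs) \<and>
                   (greedy_optimal D r c \<longleftrightarrow> c \<le> cs)))
       \<and> (deriv_at_xhigh (\<lambda>x. 1 / (2 * (1 + x))) D < 1 / (2 * (1 + xlow D))
          \<longrightarrow> (\<exists>cs. cs \<in> {x. 0 \<le> x \<and> (\<integral>y. 1 / (1 + y) * indicator {y. y < x} y \<partial>D) \<le> 1 / (1 + x)}
                  \<and> (\<forall>y\<in>{x. 0 \<le> x \<and> (\<integral>y. 1 / (1 + y) * indicator {y. y < x} y \<partial>D) \<le> 1 / (1 + x)}. y \<le> cs)
                  \<and> (greedy_optimal D (\<lambda>x. ln (1 + x) / 2) c \<longleftrightarrow> c \<le> cs)))"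
proof (intro conjI allI impI)
  fix r r' :: "real \<Rightarrow> real"
  assume h: "(\<forall>x\<ge>0. 0 \<le> r x) \<and> mono_on {0..} r \<and> concave_on {0..} r \<and>
            (\<forall>x\<ge>0. (r has_real_derivative r' x) (at x within {0..})) \<and>
            continuous_on {0..} r' \<and> deriv_at_xhigh r' D < r' (xlow D)"
  show "\<exists>cs. cs \<in> cstar_set D r' \<and> (\<forall>y\<in>cstar_set D r'. y \<le> cs) \<and> (greedy_optimal D r c \<longleftrightarrow> c \<le> cs)"
    by (rule main_general[OF assms h])
next
  assume hyp: "deriv_at_xhigh (\<lambda>x. 1 / (2 * (1 + x))) D < 1 / (2 * (1 + xlow D))"
  define r where "r = (\<lambda>x::real. ln (1 + x) / 2)"
  define r' where "r' = (\<lambda>x::real. 1 / (2 * (1 + x)))"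
  have lin: "((\<lambda>x::real. 1 + x) has_real_derivative 1) (at x)" for x
    using DERIV_add[OF DERIV_const[of 1] DERIV_ident] by simp
  have d: "(r has_real_derivative r' x) (at x)" if x: "0 \<le> x" for x
  proof -
    have "((\<lambda>x. ln (1 + x)) has_real_derivative inverse (1 + x) * 1) (at x)"
      by (rule DERIV_chain2[OF DERIV_ln lin]) (use x in simp)
    from DERIV_cdivide[OF this, of 2] show ?thesis unfolding r_def r'_def by (simp add: field_simps)
  qed
  have d2: "(r' has_real_derivative (- 1 / (2 * (1 + x)^2))) (at x)" if x: "0 \<le> x" for x
  proof -
    have l2: "((\<lambda>x::real. 2 * (1 + x)) has_real_derivative 2 * 1) (at x)"
      by (rule DERIV_cmult[OF lin])
    have "((\<lambda>x. inverse (2 * (1 + x))) has_real_derivative (- ((2 * 1) * inverse ((2 * (1 + x)) ^ Suc (Suc 0))))) (at x)"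
      by (rule DERIV_inverse_fun[OF l2]) (use x in simp)
    moreover have "(- ((2 * 1) * inverse ((2 * (1 + x)) ^ Suc (Suc 0)))) = - 1 / (2 * (1 + x)^2)"
    proof -
      have q: "(2 * (1 + x)) ^ Suc (Suc 0) = 2 * (2 * (1 + x)^2)" by (simp add: power2_eq_square algebra_simps)
      show ?thesis unfolding q by (simp add: inverse_eq_divide)
    qed
    ultimately show ?thesis unfolding r'_def by (simp add: inverse_eq_divide)
  qed
  have conc: "concave_on {0..} r"
  proof (rule f''_le0_imp_concave[where f' = r' and f'' = "\<lambda>x. - 1 / (2 * (1 + x)^2)"])
    fix x :: real assume "x \<in> {0..}"
    then have x: "0 \<le> x" by simp
    show "(r has_real_derivative r' x) (at x)" by (rule d[OF x])
    show "(r' has_real_derivative (- 1 / (2 * (1 + x)^2))) (at x)" by (rule d2[OF x])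
    show "- 1 / (2 * (1 + x)^2) \<le> 0" using x by simp
  qed simp
  have mono: "mono_on {0..} r"
    unfolding r_def by (rule mono_onI) auto
  have cont: "continuous_on {0..} r'"
    unfolding r'_def by (intro continuous_intros) auto
  have h: "(\<forall>x\<ge>0. 0 \<le> r x) \<and> mono_on {0..} r \<and> concave_on {0..} r \<and>
            (\<forall>x\<ge>0. (r has_real_derivative r' x) (at x within {0..})) \<and>
            continuous_on {0..} r' \<and> deriv_at_xhigh r' D < r' (xlow D)"
  proof (intro conjI allI impI)
    show "deriv_at_xhigh r' D < r' (xlow D)" using hyp by (simp add: r'_def)
    fix x :: real assume "0 \<le> x"
    then show "(r has_real_derivative r' x) (at x within {0..})" by (rule has_field_derivative_at_within[OF d])
  next
    fix x :: real assume "0 \<le> x"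
    then show "0 \<le> r x" by (simp add: r_def)
  qed (rule mono, rule conc, rule cont)
  obtain cs where cs: "cs \<in> cstar_set D r'" "\<forall>y\<in>cstar_set D r'. y \<le> cs" "greedy_optimal D r c \<longleftrightarrow> c \<le> cs"
    using main_general[OF assms h] by blast
  have eqset: "cstar_set D r' = {x. 0 \<le> x \<and> (\<integral>y. 1 / (1 + y) * indicator {y. y < x} y \<partial>D) \<le> 1 / (1 + x)}"
  proof -
    have "(\<integral>y. r' y * indicator {y. y < x} y \<partial>D) = (\<integral>y. 1 / (1 + y) * indicator {y. y < x} y \<partial>D) / 2" for x
    proof -
      have "(\<integral>y. r' y * indicator {y. y < x} y \<partial>D) = (\<integral>y. (1 / (1 + y) * indicator {y. y < x} y) / 2 \<partial>D)"
        unfolding r'_def by (rule Bochner_Integration.integral_cong) simp_all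
      also have "\<dots> = (\<integral>y. 1 / (1 + y) * indicator {y. y < x} y \<partial>D) / 2"
        by (rule integral_divide_zero)
      finally show ?thesis .
    qed
    moreover have "r' x = (1 / (1 + x)) / 2" for x by (simp add: r'_def)
    ultimately have "(\<integral>y. r' y * indicator {y. y < x} y \<partial>D) \<le> r' x \<longleftrightarrow>
        (\<integral>y. 1 / (1 + y) * indicator {y. y < x} y \<partial>D) \<le> 1 / (1 + x)" for x
      by (simp only: half_le)
    then show ?thesis unfolding cstar_set_def by blast
  qed
  show "\<exists>cs. cs \<in> {x. 0 \<le> x \<and> (\<integral>y. 1 / (1 + y) * indicator {y. y < x} y \<partial>D) \<le> 1 / (1 + x)}
                  \<and> (\<forall>y\<in>{x. 0 \<le> x \<and> (\<integral>y. 1 / (1 + y) * indicator {y. y < x} y \<partial>D) \<le> 1 / (1 + x)}. y \<le> cs)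
                  \<and> (greedy_optimal D (\<lambda>x. ln (1 + x) / 2) c \<longleftrightarrow> c \<le> cs)"
  proof (intro exI conjI)
    show "cs \<in> {x. 0 \<le> x \<and> (\<integral>y. 1 / (1 + y) * indicator {y. y < x} y \<partial>D) \<le> 1 / (1 + x)}"
      using cs(1) unfolding eqset .
    show "\<forall>y\<in>{x. 0 \<le> x \<and> (\<integral>y. 1 / (1 + y) * indicator {y. y < x} y \<partial>D) \<le> 1 / (1 + x)}. y \<le> cs"
      using cs(2) unfolding eqset .
    show "greedy_optimal D (\<lambda>x. ln (1 + x) / 2) c \<longleftrightarrow> c \<le> cs"
      using cs(3) unfolding r_def .
  qed
qed


end
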